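(* Let $D\subset\mathbb{R}^2$ be a compact set of finite perimeter with $\frac1r\lambda_2((D\oplus rB^2)\setminus D)\to\infty$ as $r\to0_+$, and let $A'=D\times[0,1]\subset\mathbb{R}^3$. Then $A'$ does not admit the isotropic outer Minkowski content, and for every two-dimensional linear subspace $L\subset\mathbb{R}^3$ with $e_3\notin L$, $A'$ does not admit the outer $(B^3\cap L)$-Minkowski content (indeed $\frac1r\lambda_3((A'\oplus rQ)\setminus A')\to\infty$ for every two-dimensional convex body $Q\subset L$). Consequently, there is a compact set $A\subset\mathbb{R}^3$ of finite perimeter (a disjoint union of three suitably placed isometric copies of $A'$) such that $A$ admits neither the isotropic outer Minkowski content nor the outer $Q$-Minkowski content for any two-dimensional compact convex set $Q$ contained in a two-dimensional linear subspace of $\mathbb{R}^3$.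
   Context: $B^m$ denotes the Euclidean unit ball in $\mathbb{R}^m$, $e_3$ the third standard basis vector, $\lambda_m$ Lebesgue measure, $A\oplus Q=\{x+y\}$. The outer $Q$-Minkowski content is $\mathcal{SM}_Q(A)=\lim_{r\to0_+}\frac1r\lambda_3((A\oplus rQ)\setminus A)$, admitted if the limit exists and is finite; the isotropic one uses $Q=B^3$. *)

theory Defs
  imports "HOL-Analysis.Analysis"
begin

definition msum :: "'a::real_vector set \<Rightarrow> 'a set \<Rightarrow> 'a set" where
  "msum A Q = {x + y | x y. x \<in> A \<and> y \<in> Q}"

definition dilate :: "real \<Rightarrow> 'a::real_vector set \<Rightarrow> 'a set" where
  "dilate r Q = (\<lambda>y. r *\<^sub>R y) ` Q"

definition mink_quot :: "'a::euclidean_space set \<Rightarrow> 'a set \<Rightarrow> real \<Rightarrow> real" where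
  "mink_quot Q A r = measure lebesgue (msum A (dilate r Q) - A) / r"

definition admits_outer_MC :: "'a::euclidean_space set \<Rightarrow> 'a set \<Rightarrow> bool" where
  "admits_outer_MC Q A \<longleftrightarrow> (\<exists>l::real. (mink_quot Q A \<longlongrightarrow> l) (at_right 0))"

definition test_field :: "('a::euclidean_space \<Rightarrow> 'a) \<Rightarrow> ('a \<Rightarrow> 'a \<Rightarrow>\<^sub>L 'a) \<Rightarrow> bool" where
  "test_field \<phi> \<phi>' \<longleftrightarrow> (\<forall>x. (\<phi> has_derivative blinfun_apply (\<phi>' x)) (at x))
     \<and> continuous_on UNIV \<phi>' \<and> bounded {x. \<phi> x \<noteq> 0} \<and> (\<forall>x. norm (\<phi> x) \<le> 1)"

definition divergence :: "('a::euclidean_space \<Rightarrow> 'a \<Rightarrow>\<^sub>L 'a) \<Rightarrow> 'a \<Rightarrow> real" where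
  "divergence \<phi>' x = (\<Sum>i\<in>Basis. blinfun_apply (\<phi>' x) i \<bullet> i)"

text \<open>Finite perimeter (De Giorgi): the total variation of the indicator function is finite.\<close>
definition finite_perimeter :: "'a::euclidean_space set \<Rightarrow> bool" where
  "finite_perimeter E \<longleftrightarrow> E \<in> sets lebesgue \<and>
     (\<exists>C::real. \<forall>\<phi> \<phi>'. test_field \<phi> \<phi>' \<longrightarrow> integral E (divergence \<phi>') \<le> C)"

definition cyl :: "(real^2) set \<Rightarrow> (real^3) set" where
  "cyl D = {x. (vector [x$1, x$2] :: real^2) \<in> D \<and> 0 \<le> x$3 \<and> x$3 \<le> 1}"

definition e3 :: "real^3" where "e3 = axis 3 1"

definition isometry3 :: "(real^3 \<Rightarrow> real^3) \<Rightarrow> bool" where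
  "isometry3 T \<longleftrightarrow> (\<forall>x y. dist (T x) (T y) = dist x y)"

end

theory Submission
  imports Defs
begin


definition pr3 :: "real^3 \<Rightarrow> (real^2) \<times> real" where
  "pr3 x = (vector [x$1, x$2], x$3)"
definition pinv3 :: "(real^2) \<times> real \<Rightarrow> real^3" where
  "pinv3 p = vector [(fst p)$1, (fst p)$2, snd p]"

lemma n3: "(1::3) \<noteq> 2" "(1::3) \<noteq> 3" "(2::3) \<noteq> 3" by auto
lemma n2: "(1::2) \<noteq> 2" by auto
lemma prod_3: "(\<Prod>i\<in>UNIV. (f::3\<Rightarrow>real) i) = f 1 * f 2 * f 3"
  unfolding UNIV_3 using n3 by (simp add: mult.assoc)
lemma prod_2: "(\<Prod>i\<in>UNIV. (f::2\<Rightarrow>real) i) = f 1 * f 2"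
  unfolding UNIV_2 using n2 by simp

lemma vec2_eq: "(v::real^2) = w \<longleftrightarrow> v$1 = w$1 \<and> v$2 = w$2"
  by (metis (mono_tags, lifting) exhaust_2 vec_eq_iff)
lemma vec3_eq: "(v::real^3) = w \<longleftrightarrow> v$1 = w$1 \<and> v$2 = w$2 \<and> v$3 = w$3"
  by (metis (mono_tags, lifting) exhaust_3 vec_eq_iff)

lemma pinv_pr3[simp]: "pinv3 (pr3 x) = x"
  by (simp add: pinv3_def pr3_def vec3_eq)
lemma pr_pinv3[simp]: "pr3 (pinv3 p) = p"
  by (cases p) (simp add: pinv3_def pr3_def vec2_eq)

lemma linear_pr3: "linear pr3"
  unfolding pr3_def by (auto simp: linear_iff vec2_eq)
lemma linear_pinv3: "linear pinv3"
  unfolding pinv3_def by (auto simp: linear_iff vec3_eq)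

lemma pr3_meas[measurable]: "pr3 \<in> borel_measurable borel"
  using linear_pr3 by (intro borel_measurable_continuous_onI linear_continuous_on) (simp add: linear_conv_bounded_linear) 
lemma pinv3_meas[measurable]: "pinv3 \<in> borel_measurable borel"
  using linear_pinv3 by (intro borel_measurable_continuous_onI linear_continuous_on) (simp add: linear_conv_bounded_linear) 

lemma box_pair: "box (a,c) (b,d) = box a b \<times> box c d"
  by (auto simp: mem_box Basis_prod_def ball_Un)

lemma distr_pr3: "distr lborel borel pr3 = (lborel :: ((real^2) \<times> real) measure)"
proof (rule lborel_eqI[symmetric])
  fix l u :: "(real^2) \<times> real"
  assume lu: "\<And>b. b \<in> Basis \<Longrightarrow> l \<bullet> b \<le> u \<bullet> b"
  obtain l1 l2 u1 u2 where l: "l = (l1,l2)" and u: "u = (u1,u2)" by (cases l, cases u) auto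
  have lu1: "l1$i \<le> u1$i" for i using lu[of "(axis i 1, 0)"]
    by (auto simp: l u Basis_prod_def inner_axis cart_eq_inner_axis[symmetric])
  have lu2: "l2 \<le> u2" using lu[of "(0, 1)"] by (auto simp: l u Basis_prod_def)
  have pre: "pr3 -` box l u = box (pinv3 l) (pinv3 u)"
    by (auto simp: l u pr3_def pinv3_def box_pair mem_box_cart forall_2 forall_3)
  have le3: "\<forall>b\<in>Basis. pinv3 l \<bullet> b \<le> pinv3 u \<bullet> b"
    using lu1 lu2 by (auto simp: cart_eq_inner_axis[symmetric] Basis_vec_def l u pinv3_def forall_3)
  have "emeasure (distr lborel borel pr3) (box l u) = emeasure lborel (box (pinv3 l) (pinv3 u))"
    by (simp add: emeasure_distr pre)
  also have "\<dots> = ennreal (Henstock_Kurzweil_Integration.content (cbox (pinv3 l) (pinv3 u)))"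
    using le3 by (simp add: content_cbox inner_diff_left)
  also have "\<dots> = ennreal ((u1$1 - l1$1) * (u1$2 - l1$2) * (u2 - l2))"
  proof -
    have "pinv3 l \<in> cbox (pinv3 l) (pinv3 u)" using lu1 lu2
      by (simp add: mem_box_cart l u pinv3_def forall_3)
    then have "cbox (pinv3 l) (pinv3 u) \<noteq> {}" by blast
    then show ?thesis by (simp add: content_cbox_cart prod_3 l u pinv3_def)
  qed
  also have "\<dots> = ennreal (prod ((\<bullet>) (u - l)) Basis)"
  proof -
    have "prod ((\<bullet>) (u - l)) Basis = Henstock_Kurzweil_Integration.content (cbox l u)"
      using lu by (simp add: content_cbox inner_diff_left)
    also have "\<dots> = Henstock_Kurzweil_Integration.content (cbox l1 u1) * (u2 - l2)"
      using lu2 by (simp add: l u content_Pair)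
    also have "\<dots> = (u1$1 - l1$1) * (u1$2 - l1$2) * (u2 - l2)"
    proof -
      have "l1 \<in> cbox l1 u1" using lu1 by (simp add: mem_box_cart)
      then have "cbox l1 u1 \<noteq> {}" by blast
      then show ?thesis by (simp add: content_cbox_cart prod_2)
    qed
    finally show ?thesis by simp
  qed
  finally show "emeasure (distr lborel borel pr3) (box l u) = ennreal (prod ((\<bullet>) (u - l)) Basis)" .
qed simp


definition hp :: "real^3 \<Rightarrow> real^2" where "hp x = vector [x$1, x$2]"

lemma hp_pr3: "hp x = fst (pr3 x)" by (simp add: hp_def pr3_def)

lemma cyl_alt: "cyl D = {x. hp x \<in> D \<and> 0 \<le> x$3 \<and> x$3 \<le> 1}"
  by (simp add: cyl_def hp_def)

lemma vec2_self[simp]: "vector [a$1, a$2] = (a::real^2)" by (simp add: vec2_eq)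

lemma times_borel: "(S::(real^2) set) \<in> sets borel \<Longrightarrow> S \<times> {a..b::real} \<in> sets borel"
  by (subst borel_prod[symmetric]) (intro pair_measureI, auto)

lemma emeasure_slab:
  fixes S :: "(real^2) set"
  assumes S: "S \<in> sets borel" and ab: "a \<le> b"
  shows "emeasure lborel {x::real^3. hp x \<in> S \<and> a \<le> x$3 \<and> x$3 \<le> b} = emeasure lborel S * ennreal (b - a)"
proof -
  have eq: "{x::real^3. hp x \<in> S \<and> a \<le> x$3 \<and> x$3 \<le> b} = pr3 -` (S \<times> {a..b}) \<inter> space lborel"
    by (auto simp: hp_pr3) (auto simp: pr3_def)
  have "emeasure lborel (pr3 -` (S \<times> {a..b}) \<inter> space lborel) = emeasure (distr lborel borel pr3) (S \<times> {a..b})"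
    using S times_borel by (subst emeasure_distr) auto
  also have "\<dots> = emeasure (lborel \<Otimes>\<^sub>M lborel) (S \<times> {a..b})"
    by (simp add: distr_pr3 lborel_prod)
  also have "\<dots> = emeasure lborel S * emeasure lborel {a..b}"
    using S by (intro lborel.emeasure_pair_measure_Times) auto
  also have "\<dots> = emeasure lborel S * ennreal (b - a)"
    using ab by simp
  finally show ?thesis by (simp add: eq)
qed

lemma measure_slab:
  fixes S :: "(real^2) set"
  assumes S: "S \<in> sets borel" "bounded S" and ab: "a \<le> b"
  shows "measure lebesgue {x::real^3. hp x \<in> S \<and> a \<le> x$3 \<and> x$3 \<le> b} = measure lebesgue S * (b - a)"
proof -
  have m: "{x::real^3. hp x \<in> S \<and> a \<le> x$3 \<and> x$3 \<le> b} \<in> sets borel"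
  proof -
    have "{x::real^3. hp x \<in> S \<and> a \<le> x$3 \<and> x$3 \<le> b} = pr3 -` (S \<times> {a..b}) \<inter> space borel"
      by (auto simp: hp_pr3) (auto simp: pr3_def)
    then show ?thesis using S times_borel[of S a b] by (metis measurable_sets pr3_meas)
  qed
  have fin: "emeasure lborel S < \<infinity>" using S emeasure_bounded_finite by blast
  have "measure lborel {x::real^3. hp x \<in> S \<and> a \<le> x$3 \<and> x$3 \<le> b} = measure lborel S * (b - a)"
    using emeasure_slab[OF S(1) ab] fin ab unfolding measure_def
    by (simp add: enn2real_mult)
  then show ?thesis using m S by (simp add: measure_completion)
qed

lemma compact_cyl: "compact D \<Longrightarrow> compact (cyl D)"
proof -
  assume D: "compact D"
  have "cyl D = pinv3 ` (D \<times> {0..1})"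
  proof
    show "cyl D \<subseteq> pinv3 ` (D \<times> {0..1})"
    proof
      fix x assume "x \<in> cyl D"
      then have "pr3 x \<in> D \<times> {0..1}" by (auto simp: cyl_def pr3_def)
      then show "x \<in> pinv3 ` (D \<times> {0..1})" by (metis pinv_pr3 imageI)
    qed
    show "pinv3 ` (D \<times> {0..1}) \<subseteq> cyl D"
      by (auto simp: cyl_def pinv3_def vec2_eq)
  qed
  moreover have "continuous_on UNIV pinv3"
    using linear_pinv3 by (intro linear_continuous_on) (simp add: linear_conv_bounded_linear)
  ultimately show ?thesis using D
    by (metis compact_Times compact_Icc compact_continuous_image continuous_on_subset subset_UNIV)
qed


lemma compact_msum: "compact (A::'a::euclidean_space set) \<Longrightarrow> compact Q \<Longrightarrow> compact (msum A (dilate r Q))"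
  unfolding msum_def dilate_def by (intro compact_sums compact_scaling)

lemma msum_diff_fmeas: "compact (A::'a::euclidean_space set) \<Longrightarrow> compact Q \<Longrightarrow> msum A (dilate r Q) - A \<in> lmeasurable"
  by (intro fmeasurable_Diff lmeasurable_compact compact_msum) (auto intro: fmeasurableD lmeasurable_compact)

lemma scale_right0: "e > 0 \<Longrightarrow> filterlim (\<lambda>r::real. e * r) (at_right 0) (at_right 0)"
proof -
  assume e: "e > 0"
  have "((\<lambda>r::real. e * r) \<longlongrightarrow> e * 0) (at_right 0)"
    by (intro tendsto_intros)
  moreover have "\<forall>\<^sub>F r in at_right (0::real). e * r > 0"
    using e by (auto simp: eventually_at_right_less intro: eventually_mono[OF eventually_at_right_less])
  ultimately show ?thesis by (auto intro: tendsto_imp_filterlim_at_right)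
qed

lemma core_incl:
  fixes D :: "(real^2) set" and Q :: "(real^3) set"
  assumes eps: "\<epsilon> > 0" and r: "r > 0"
    and lift: "\<forall>w::real^2. norm w \<le> \<epsilon> \<longrightarrow> vector [w$1, w$2, c1*w$1+c2*w$2] \<in> Q"
  defines "\<rho> \<equiv> \<epsilon> * r" and "K \<equiv> \<bar>c1\<bar> + \<bar>c2\<bar>"
  shows "{x. hp x \<in> msum D (dilate \<rho> (cball 0 1)) - D \<and> K*\<rho> \<le> x$3 \<and> x$3 \<le> 1 - K*\<rho>}
          \<subseteq> msum (cyl D) (dilate r Q) - cyl D"
proof
  fix x :: "real^3"
  assume x: "x \<in> {x. hp x \<in> msum D (dilate \<rho> (cball 0 1)) - D \<and> K*\<rho> \<le> x$3 \<and> x$3 \<le> 1 - K*\<rho>}"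
  then obtain d u where d: "d \<in> D" and u: "norm (u::real^2) \<le> 1" and hx: "hp x = d + \<rho> *\<^sub>R u"
    and nD: "hp x \<notin> D" and x3: "K*\<rho> \<le> x$3" "x$3 \<le> 1 - K*\<rho>"
    by (auto simp: msum_def dilate_def)
  define w where "w = \<rho> *\<^sub>R u"
  define w' where "w' = \<epsilon> *\<^sub>R u"
  have nw': "norm w' \<le> \<epsilon>" using u eps by (simp add: w'_def mult_left_le)
  define q :: "real^3" where "q = vector [w'$1, w'$2, c1*w'$1+c2*w'$2]"
  have qQ: "q \<in> Q" using lift nw' by (simp add: q_def)
  have rq: "r *\<^sub>R q = vector [w$1, w$2, c1*w$1+c2*w$2]"
    by (simp add: q_def w_def w'_def vec3_eq \<rho>_def algebra_simps)
  have nw: "norm w \<le> \<rho>" using u eps r by (simp add: w_def \<rho>_def mult_left_le)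
  have w1: "\<bar>w$1\<bar> \<le> \<rho>" and w2: "\<bar>w$2\<bar> \<le> \<rho>"
    using nw component_le_norm_cart[of w] by (meson order_trans)+
  have "\<bar>c1*w$1+c2*w$2\<bar> \<le> \<bar>c1\<bar>*\<rho> + \<bar>c2\<bar>*\<rho>"
  proof -
    have "\<bar>c1*w$1\<bar> \<le> \<bar>c1\<bar>*\<rho>" using w1 by (simp add: abs_mult mult_left_mono)
    moreover have "\<bar>c2*w$2\<bar> \<le> \<bar>c2\<bar>*\<rho>" using w2 by (simp add: abs_mult mult_left_mono)
    ultimately show ?thesis by linarith
  qed
  then have s: "\<bar>c1*w$1+c2*w$2\<bar> \<le> K*\<rho>" by (simp add: K_def algebra_simps)
  define c where "c = x - r *\<^sub>R q"
  have "hp c = d"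
    using hx by (simp add: c_def rq hp_def vec2_eq w_def)
  moreover have "0 \<le> c$3" "c$3 \<le> 1"
    using s x3 by (auto simp: c_def rq)
  ultimately have cC: "c \<in> cyl D" using d by (simp add: cyl_alt)
  have "x = c + r *\<^sub>R q" by (simp add: c_def)
  then have "x \<in> msum (cyl D) (dilate r Q)"
    using cC qQ by (auto simp: msum_def dilate_def)
  moreover have "x \<notin> cyl D" using nD by (simp add: cyl_alt)
  ultimately show "x \<in> msum (cyl D) (dilate r Q) - cyl D" by blast
qed


lemma slab_borel:
  fixes S :: "(real^2) set"
  assumes S: "S \<in> sets borel"
  shows "{x::real^3. hp x \<in> S \<and> a \<le> x$3 \<and> x$3 \<le> b} \<in> sets borel"
proof -
  have "{x::real^3. hp x \<in> S \<and> a \<le> x$3 \<and> x$3 \<le> b} = pr3 -` (S \<times> {a..b}) \<inter> space borel"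
    by (auto simp: hp_pr3) (auto simp: pr3_def)
  then show ?thesis using S times_borel[of S a b] by (metis measurable_sets pr3_meas)
qed

lemma core:
  fixes D :: "(real^2) set" and Q :: "(real^3) set"
  assumes D: "compact D" and Q: "compact Q"
    and lim: "filterlim (mink_quot (cball 0 1) D) at_top (at_right 0)"
    and eps: "\<epsilon> > 0"
    and lift: "\<forall>w::real^2. norm w \<le> \<epsilon> \<longrightarrow> vector [w$1, w$2, c1*w$1+c2*w$2] \<in> Q"
  shows "filterlim (mink_quot Q (cyl D)) at_top (at_right 0)"
proof -
  define K where "K = \<bar>c1\<bar> + \<bar>c2\<bar>"
  have K0: "K \<ge> 0" by (simp add: K_def)
  define \<delta> where "\<delta> = 1 / (4*K*\<epsilon> + 1)"
  have "4*K*\<epsilon> \<ge> 0" using K0 eps by simp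
  then have \<delta>0: "\<delta> > 0" by (simp add: \<delta>_def)
  have bound: "mink_quot Q (cyl D) r \<ge> \<epsilon>/2 * mink_quot (cball 0 1) D (\<epsilon>*r)"
    if r: "0 < r" "r < \<delta>" for r
  proof -
    define \<rho> where "\<rho> = \<epsilon> * r"
    have \<rho>0: "\<rho> > 0" using eps r by (simp add: \<rho>_def)
    have pos: "4*K*\<epsilon> + 1 > 0" using K0 eps by (smt (verit) mult_nonneg_nonneg)
    have "(4*K*\<epsilon> + 1) * r < (4*K*\<epsilon> + 1) * \<delta>"
      using r pos by simp
    also have "\<dots> = 1" using pos by (simp add: \<delta>_def)
    finally have "(4*K*\<epsilon> + 1) * r < 1" .
    then have Kr: "4*K*\<rho> \<le> 1" using K0 eps r by (simp add: \<rho>_def algebra_simps)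
    define S where "S = msum D (dilate \<rho> (cball 0 1)) - D"
    have Sf: "S \<in> lmeasurable" unfolding S_def by (intro msum_diff_fmeas D) simp
    have Sb: "S \<in> sets borel" unfolding S_def using D
      by (intro sets.Diff borel_compact compact_msum) auto
    have Sbd: "bounded S" unfolding S_def using D
      by (meson bounded_diff compact_imp_bounded compact_msum compact_cball)
    define Y where "Y = {x. hp x \<in> S \<and> K*\<rho> \<le> x$3 \<and> x$3 \<le> 1 - K*\<rho>}"
    define X where "X = msum (cyl D) (dilate r Q) - cyl D"
    have YX: "Y \<subseteq> X"
      unfolding Y_def X_def S_def \<rho>_def K_def using core_incl[OF eps r(1) lift] by simp
    have Xf: "X \<in> lmeasurable" unfolding X_def by (intro msum_diff_fmeas compact_cyl D Q)
    have Ys: "Y \<in> sets lebesgue" unfolding Y_def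
      using slab_borel[OF Sb] by (auto intro: sets_completionI_sets)
    have mY: "measure lebesgue Y = measure lebesgue S * (1 - 2*K*\<rho>)"
      unfolding Y_def using measure_slab[OF Sb Sbd, of "K*\<rho>" "1 - K*\<rho>"] Kr K0 \<rho>0
      by (simp add: algebra_simps)
    have "measure lebesgue S * (1 - 2*K*\<rho>) \<le> measure lebesgue X"
      using measure_mono_fmeasurable[OF YX Ys Xf] mY by simp
    moreover have "measure lebesgue S \<ge> 0" by simp
    moreover have "1 - 2*K*\<rho> \<ge> 1/2" using Kr by simp
    ultimately have "measure lebesgue S / 2 \<le> measure lebesgue X"
    proof -
      assume a: "measure lebesgue S * (1 - 2*K*\<rho>) \<le> measure lebesgue X" "measure lebesgue S \<ge> 0" "1 - 2*K*\<rho> \<ge> 1/2"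
      have "measure lebesgue S * (1/2) \<le> measure lebesgue S * (1 - 2*K*\<rho>)"
        by (intro mult_left_mono a(3) a(2))
      then show ?thesis using a(1) by simp
    qed
    then have "measure lebesgue S / 2 / r \<le> measure lebesgue X / r"
      using r by (intro divide_right_mono) auto
    moreover have "\<epsilon>/2 * mink_quot (cball 0 1) D (\<epsilon>*r) = measure lebesgue S / 2 / r"
      using eps r by (simp add: mink_quot_def S_def \<rho>_def field_simps)
    moreover have "mink_quot Q (cyl D) r = measure lebesgue X / r"
      by (simp add: mink_quot_def X_def)
    ultimately show ?thesis by simp
  qed
  have l1: "filterlim (\<lambda>r. mink_quot (cball 0 1) D (\<epsilon>*r)) at_top (at_right 0)"
    using filterlim_compose[OF lim scale_right0[OF eps]] by simp
  have l2: "filterlim (\<lambda>r. \<epsilon>/2 * mink_quot (cball 0 1) D (\<epsilon>*r)) at_top (at_right 0)"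
    using eps by (intro filterlim_tendsto_pos_mult_at_top[OF tendsto_const _ l1]) simp
  have ev: "\<forall>\<^sub>F r in at_right 0. \<epsilon>/2 * mink_quot (cball 0 1) D (\<epsilon>*r) \<le> mink_quot Q (cyl D) r"
    unfolding eventually_at_right_field using \<delta>0 bound by blast
  show ?thesis by (rule filterlim_at_top_mono[OF l2 ev])
qed


lemma trans_quot:
  fixes A Q :: "(real^3) set"
  assumes A: "compact A" and Q: "compact Q" and q0: "q0 \<in> Q" and r: "r > 0"
  shows "mink_quot ((\<lambda>q. q - q0) ` Q) A r \<le> mink_quot Q A r"
proof -
  define Q' where "Q' = (\<lambda>q. q - q0) ` Q"
  have Q': "compact Q'" unfolding Q'_def using Q by (intro compact_translation_subtract)
  define M where "M = msum A (dilate r Q)"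
  define M' where "M' = msum A (dilate r Q')"
  have MM: "M = (+) (r *\<^sub>R q0) ` M'"
  proof
    show "M \<subseteq> (+) (r *\<^sub>R q0) ` M'"
    proof
      fix x assume "x \<in> M"
      then obtain a q where a: "a \<in> A" "q \<in> Q" "x = a + r *\<^sub>R q"
        by (auto simp: M_def msum_def dilate_def)
      have "a + r *\<^sub>R (q - q0) \<in> M'" using a by (auto simp: M'_def Q'_def msum_def dilate_def)
      moreover have "x = r *\<^sub>R q0 + (a + r *\<^sub>R (q - q0))" using a by (simp add: algebra_simps)
      ultimately show "x \<in> (+) (r *\<^sub>R q0) ` M'" by blast
    qed
    show "(+) (r *\<^sub>R q0) ` M' \<subseteq> M"
    proof
      fix x assume "x \<in> (+) (r *\<^sub>R q0) ` M'"
      then obtain a q where a: "a \<in> A" "q \<in> Q" "x = r *\<^sub>R q0 + (a + r *\<^sub>R (q - q0))"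
        by (auto simp: M'_def Q'_def msum_def dilate_def)
      have "x = a + r *\<^sub>R q" using a by (simp add: algebra_simps)
      moreover have "r *\<^sub>R q \<in> dilate r Q" unfolding dilate_def by (intro imageI a(2))
      ultimately show "x \<in> M" using a unfolding M_def msum_def by blast
    qed
  qed
  have AM': "A \<subseteq> M'"
  proof
    fix a assume "a \<in> A"
    moreover have "0 \<in> Q'" using q0 by (auto simp: Q'_def)
    ultimately have "a + r *\<^sub>R 0 \<in> M'" unfolding M'_def msum_def dilate_def by blast
    then show "a \<in> M'" by simp
  qed
  have Mf: "M \<in> lmeasurable" unfolding M_def by (intro lmeasurable_compact compact_msum A Q)
  have M'f: "M' \<in> lmeasurable" unfolding M'_def by (intro lmeasurable_compact compact_msum A Q')
  have Af: "A \<in> lmeasurable" by (intro lmeasurable_compact A)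
  have "measure lebesgue (M' - A) = measure lebesgue M' - measure lebesgue A"
    using M'f Af AM' by (intro measure_Diff) (auto simp: fmeasurable_def)
  also have "\<dots> = measure lebesgue M - measure lebesgue A"
    by (simp add: MM measure_translation)
  also have "\<dots> \<le> measure lebesgue (M - A)"
    using Mf Af by (rule measure_diff_le_measure_setdiff)
  finally have "measure lebesgue (M' - A) \<le> measure lebesgue (M - A)" .
  then show ?thesis using r
    by (simp add: mink_quot_def M_def M'_def Q'_def divide_right_mono)
qed

lemma plane_interior:
  fixes Q :: "(real^3) set" and a :: "real^3"
  assumes Qc: "convex Q" and Qd: "aff_dim Q = 2" and QL: "Q \<subseteq> {x. a \<bullet> x = 0}" and a: "a \<noteq> 0"
  shows "\<exists>q0\<in>Q. \<exists>e>0. \<forall>v. a \<bullet> v = 0 \<and> norm v \<le> e \<longrightarrow> q0 + v \<in> Q"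
proof -
  have "Q \<noteq> {}" using Qd by auto
  then obtain q0 where q0: "q0 \<in> rel_interior Q" using rel_interior_eq_empty[OF Qc] by blast
  then obtain e where e: "e > 0" "cball q0 e \<inter> affine hull Q \<subseteq> Q" "q0 \<in> Q"
    by (auto simp: mem_rel_interior_cball)
  have H: "affine {x::real^3. a \<bullet> x = 0}" by (simp add: affine_hyperplane)
  have sub: "affine hull Q \<subseteq> {x. a \<bullet> x = 0}" using QL H by (simp add: hull_minimal)
  have "aff_dim {x::real^3. a \<bullet> x = 0} = 2" using aff_dim_hyperplane[OF a] by simp
  have eq: "affine hull Q = {x. a \<bullet> x = 0}"
  proof (rule ccontr)
    assume "affine hull Q \<noteq> {x. a \<bullet> x = 0}"
    then have "affine hull Q \<subset> affine hull {x. a \<bullet> x = 0}" using sub H by (simp add: hull_same psubset_eq)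
    then have "aff_dim Q < aff_dim {x::real^3. a \<bullet> x = 0}" by (rule aff_dim_psubset)
    then show False using Qd \<open>aff_dim {x::real^3. a \<bullet> x = 0} = 2\<close> by simp
  qed
  have "q0 + v \<in> Q" if "a \<bullet> v = 0" "norm v \<le> e" for v
  proof -
    have "a \<bullet> q0 = 0" using QL e(3) by auto
    then have "q0 + v \<in> affine hull Q" using that eq by (simp add: inner_add_right)
    moreover have "q0 + v \<in> cball q0 e" using that by (simp add: dist_norm)
    ultimately show ?thesis using e by blast
  qed
  then show ?thesis using e by blast
qed


lemma inner3: "(x::real^3) \<bullet> y = x$1*y$1 + x$2*y$2 + x$3*y$3"
  by (simp add: inner_vec_def sum_3)

lemma lift_from_normal:
  fixes a :: "real^3"
  assumes a3: "a$3 \<noteq> 0" and e: "e > 0"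
  shows "\<exists>c1 c2 \<epsilon>. \<epsilon> > 0 \<and> (\<forall>w::real^2. norm w \<le> \<epsilon> \<longrightarrow>
            a \<bullet> vector [w$1, w$2, c1*w$1+c2*w$2] = 0 \<and> norm (vector [w$1, w$2, c1*w$1+c2*w$2] :: real^3) \<le> e)"
proof -
  define c1 where "c1 = - a$1 / a$3"
  define c2 where "c2 = - a$2 / a$3"
  define K where "K = \<bar>c1\<bar> + \<bar>c2\<bar>"
  have K0: "K \<ge> 0" by (simp add: K_def)
  define \<epsilon> where "\<epsilon> = e / (2 + K)"
  have \<epsilon>0: "\<epsilon> > 0" using e K0 by (simp add: \<epsilon>_def)
  have "a \<bullet> (vector [w$1, w$2, c1*w$1+c2*w$2] :: real^3) = 0" for w :: "real^2"
    using a3 by (simp add: inner3 c1_def c2_def field_simps)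
  moreover have "norm (vector [w$1, w$2, c1*w$1+c2*w$2] :: real^3) \<le> e" if w: "norm w \<le> \<epsilon>" for w :: "real^2"
  proof -
    let ?v = "vector [w$1, w$2, c1*w$1+c2*w$2] :: real^3"
    have w1: "\<bar>w$1\<bar> \<le> norm w" and w2: "\<bar>w$2\<bar> \<le> norm w" by (rule component_le_norm_cart)+
    have "norm ?v \<le> \<bar>?v$1\<bar> + \<bar>?v$2\<bar> + \<bar>?v$3\<bar>"
      using norm_le_l1_cart[of ?v] by (simp add: sum_3)
    also have "\<dots> \<le> \<bar>w$1\<bar> + \<bar>w$2\<bar> + (\<bar>c1\<bar>*\<bar>w$1\<bar> + \<bar>c2\<bar>*\<bar>w$2\<bar>)"
      by (simp add: abs_triangle_ineq[THEN order_trans] abs_mult)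
    also have "\<dots> \<le> norm w + norm w + (\<bar>c1\<bar>*norm w + \<bar>c2\<bar>*norm w)"
      using w1 w2 by (intro add_mono mult_left_mono) auto
    also have "\<dots> = (2 + K) * norm w" by (simp add: K_def algebra_simps)
    also have "\<dots> \<le> (2 + K) * \<epsilon>" using w K0 by (intro mult_left_mono) auto
    also have "\<dots> = e" using K0 by (simp add: \<epsilon>_def)
    finally show ?thesis .
  qed
  ultimately show ?thesis using \<epsilon>0 by blast
qed

lemma plane_to_infty:
  fixes D :: "(real^2) set" and Q :: "(real^3) set" and a :: "real^3"
  assumes D: "compact D" and lim: "filterlim (mink_quot (cball 0 1) D) at_top (at_right 0)"
    and Q: "compact Q" "convex Q" "aff_dim Q = 2" "Q \<subseteq> {x. a \<bullet> x = 0}" and a3: "a$3 \<noteq> 0"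
  shows "filterlim (mink_quot Q (cyl D)) at_top (at_right 0)"
proof -
  have a: "a \<noteq> 0" using a3 by auto
  obtain q0 e where q0: "q0 \<in> Q" and e: "e > 0" and qe: "\<forall>v. a \<bullet> v = 0 \<and> norm v \<le> e \<longrightarrow> q0 + v \<in> Q"
    using plane_interior[OF Q(2,3,4) a] by blast
  obtain c1 c2 \<epsilon> where \<epsilon>: "\<epsilon> > 0" and lf: "\<forall>w::real^2. norm w \<le> \<epsilon> \<longrightarrow>
            a \<bullet> vector [w$1, w$2, c1*w$1+c2*w$2] = 0 \<and> norm (vector [w$1, w$2, c1*w$1+c2*w$2] :: real^3) \<le> e"
    using lift_from_normal[OF a3 e] by blast
  define Q' where "Q' = (\<lambda>q. q - q0) ` Q"
  have Q': "compact Q'" unfolding Q'_def using Q(1) by (intro compact_translation_subtract)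
  have "\<forall>w::real^2. norm w \<le> \<epsilon> \<longrightarrow> vector [w$1, w$2, c1*w$1+c2*w$2] \<in> Q'"
  proof (intro allI impI)
    fix w :: "real^2" assume "norm w \<le> \<epsilon>"
    then have "q0 + vector [w$1, w$2, c1*w$1+c2*w$2] \<in> Q" using lf qe by blast
    then have "(q0 + vector [w$1, w$2, c1*w$1+c2*w$2]) - q0 \<in> Q'" unfolding Q'_def by (rule imageI)
    then show "vector [w$1, w$2, c1*w$1+c2*w$2] \<in> Q'" by simp
  qed
  from core[OF D Q' lim \<epsilon> this]
  have l: "filterlim (mink_quot Q' (cyl D)) at_top (at_right 0)" .
  have "\<forall>\<^sub>F r in at_right 0. mink_quot Q' (cyl D) r \<le> mink_quot Q (cyl D) r"
    unfolding eventually_at_right_field Q'_def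
    using trans_quot[OF compact_cyl[OF D] Q(1) q0] by (intro exI[of _ 1]) auto
  then show ?thesis by (rule filterlim_at_top_mono[OF l])
qed

lemma ball_plane_to_infty:
  fixes D :: "(real^2) set" and a :: "real^3"
  assumes D: "compact D" and lim: "filterlim (mink_quot (cball 0 1) D) at_top (at_right 0)"
    and a3: "a$3 \<noteq> 0"
  shows "filterlim (mink_quot (cball 0 1 \<inter> {x. a \<bullet> x = 0}) (cyl D)) at_top (at_right 0)"
proof -
  obtain c1 c2 \<epsilon> where \<epsilon>: "\<epsilon> > 0" and lf: "\<forall>w::real^2. norm w \<le> \<epsilon> \<longrightarrow>
            a \<bullet> vector [w$1, w$2, c1*w$1+c2*w$2] = 0 \<and> norm (vector [w$1, w$2, c1*w$1+c2*w$2] :: real^3) \<le> 1"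
    using lift_from_normal[OF a3, of 1] by auto
  have c: "compact (cball (0::real^3) 1 \<inter> {x. a \<bullet> x = 0})"
    by (intro compact_Int_closed closed_hyperplane compact_cball)
  show ?thesis
    by (rule core[OF D c lim \<epsilon>]) (use lf in auto)
qed

lemma ball_to_infty:
  fixes D :: "(real^2) set"
  assumes D: "compact D" and lim: "filterlim (mink_quot (cball 0 1) D) at_top (at_right 0)"
  shows "filterlim (mink_quot (cball 0 1) (cyl D)) at_top (at_right 0)"
proof -
  have a3: "(axis 3 1 :: real^3)$3 \<noteq> 0" by simp
  obtain c1 c2 \<epsilon> where \<epsilon>: "\<epsilon> > 0" and lf: "\<forall>w::real^2. norm w \<le> \<epsilon> \<longrightarrow>
            (axis 3 1 :: real^3) \<bullet> vector [w$1, w$2, c1*w$1+c2*w$2] = 0 \<and> norm (vector [w$1, w$2, c1*w$1+c2*w$2] :: real^3) \<le> 1"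
    using lift_from_normal[OF a3, of 1] by auto
  show ?thesis
    by (rule core[OF D compact_cball lim \<epsilon>]) (use lf in auto)
qed

lemma not_admits:
  assumes "filterlim (mink_quot Q A) at_top (at_right 0)"
  shows "\<not> admits_outer_MC Q A"
proof
  assume "admits_outer_MC Q A"
  then obtain l where "(mink_quot Q A \<longlongrightarrow> l) (at_right 0)" by (auto simp: admits_outer_MC_def)
  with assms show False
    using not_tendsto_and_filterlim_at_infinity[of "at_right (0::real)" "mink_quot Q A" l]
      filterlim_at_top_imp_at_infinity by (metis trivial_limit_at_right_real)
qed


definition rot2 :: "real^3 \<Rightarrow> real^3" where "rot2 x = vector [x$3, x$1, x$2]"
definition rot3 :: "real^3 \<Rightarrow> real^3" where "rot3 x = vector [x$2, x$3, x$1]"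

lemma rot23[simp]: "rot2 (rot3 x) = x" "rot3 (rot2 x) = x"
  by (simp_all add: rot2_def rot3_def vec3_eq)

lemma linear_rot: "linear rot2" "linear rot3"
  by (auto simp: linear_iff rot2_def rot3_def vec3_eq)

lemma inner_rot: "rot2 v \<bullet> rot2 w = v \<bullet> w" "rot3 v \<bullet> rot3 w = v \<bullet> w"
  by (simp_all add: inner3 rot2_def rot3_def algebra_simps)

lemma norm_rot[simp]: "norm (rot2 v) = norm v" "norm (rot3 v) = norm v"
  by (simp_all add: norm_eq_sqrt_inner inner_rot)

lemma orth_rot: "orthogonal_transformation rot2" "orthogonal_transformation rot3"
  by (simp_all add: orthogonal_transformation_def linear_rot inner_rot)

lemma inner_rot_adj: "a \<bullet> rot2 y = rot3 a \<bullet> y" "a \<bullet> rot3 y = rot2 a \<bullet> y"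
  by (simp_all add: inner3 rot2_def rot3_def algebra_simps)

lemma orth_id: "orthogonal_transformation (id :: real^3 \<Rightarrow> real^3)"
  by (simp add: orthogonal_transformation_def linear_id)

lemma quot_image:
  fixes R R' :: "real^3 \<Rightarrow> real^3" and C Q :: "(real^3) set"
  assumes R: "orthogonal_transformation R" and inv1: "\<And>x. R (R' x) = x" and inv2: "\<And>x. R' (R x) = x"
    and C: "compact C" and Q: "compact Q"
  shows "mink_quot Q ((\<lambda>x. R x + c) ` C) r = mink_quot (R' ` Q) C r"
proof -
  have lin: "linear R" using R by (simp add: orthogonal_transformation_linear)
  define T where "T = (\<lambda>x. R x + c)"
  have injT: "inj T" unfolding T_def by (metis (mono_tags, lifting) add_right_cancel injI inv2)
  have eq: "msum (T ` C) (dilate r Q) = T ` msum C (dilate r (R' ` Q))"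
  proof
    show "msum (T ` C) (dilate r Q) \<subseteq> T ` msum C (dilate r (R' ` Q))"
    proof
      fix z assume "z \<in> msum (T ` C) (dilate r Q)"
      then obtain x q where xq: "x \<in> C" "q \<in> Q" "z = T x + r *\<^sub>R q"
        by (auto simp: msum_def dilate_def)
      have "z = T (x + r *\<^sub>R R' q)"
        using xq lin by (simp add: T_def linear_add linear_scale inv1 algebra_simps)
      moreover have "x + r *\<^sub>R R' q \<in> msum C (dilate r (R' ` Q))"
        using xq unfolding msum_def dilate_def by blast
      ultimately show "z \<in> T ` msum C (dilate r (R' ` Q))" by blast
    qed
    show "T ` msum C (dilate r (R' ` Q)) \<subseteq> msum (T ` C) (dilate r Q)"
    proof
      fix z assume "z \<in> T ` msum C (dilate r (R' ` Q))"
      then obtain x q where xq: "x \<in> C" "q \<in> Q" "z = T (x + r *\<^sub>R R' q)"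
        by (auto simp: msum_def dilate_def)
      have "z = T x + r *\<^sub>R q"
        using xq lin by (simp add: T_def linear_add linear_scale inv1 algebra_simps)
      then show "z \<in> msum (T ` C) (dilate r Q)"
        using xq unfolding msum_def dilate_def by blast
    qed
  qed
  have RQ: "compact (R' ` Q)"
  proof -
    have "linear R'"
    proof (rule linearI)
      fix x y :: "real^3"
      have "R' (x + y) = R' (R (R' x) + R (R' y))" by (simp add: inv1)
      also have "\<dots> = R' x + R' y" by (simp add: linear_add[OF lin, symmetric] inv2)
      finally show "R' (x + y) = R' x + R' y" .
    next
      fix c :: real and x :: "real^3"
      have "R' (c *\<^sub>R x) = R' (c *\<^sub>R R (R' x))" by (simp add: inv1)
      also have "\<dots> = c *\<^sub>R R' x" by (simp add: linear_scale[OF lin, symmetric] inv2)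
      finally show "R' (c *\<^sub>R x) = c *\<^sub>R R' x" .
    qed
    then have "continuous_on Q R'" by (intro linear_continuous_on) (simp add: linear_conv_bounded_linear)
    then show ?thesis using Q by (rule compact_continuous_image)
  qed
  define X where "X = msum C (dilate r (R' ` Q)) - C"
  have Xf: "X \<in> lmeasurable" unfolding X_def by (intro msum_diff_fmeas C RQ)
  have "msum (T ` C) (dilate r Q) - T ` C = T ` X"
    unfolding X_def eq using injT by (simp add: image_set_diff)
  moreover have "T ` X = (+) c ` (R ` X)" by (auto simp: T_def add.commute image_image)
  moreover have "measure lebesgue (R ` X) = measure lebesgue X"
    by (rule measure_orthogonal_image[OF R Xf])
  ultimately have "measure lebesgue (msum (T ` C) (dilate r Q) - T ` C) = measure lebesgue X"
    by (simp add: measure_translation)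
  then show ?thesis by (simp add: mink_quot_def X_def T_def)
qed


definition cpy :: "real \<Rightarrow> (real^3 \<Rightarrow> real^3) \<Rightarrow> real^3 \<Rightarrow> real^3" where
  "cpy m R x = R x + vector [m, 0, 0]"

lemma subspace_normal:
  fixes L :: "(real^3) set"
  assumes "subspace L" "dim L = 2"
  shows "\<exists>a. a \<noteq> 0 \<and> L = {x. a \<bullet> x = 0}"
proof -
  have "dim L = DIM(real^3) - 1" using assms by simp
  then obtain a where "a \<noteq> 0" "span L = {x. a \<bullet> x = 0}" using dim_eq_hyperplane by blast
  then show ?thesis using assms(1) by (metis span_eq_iff)
qed

lemma union_quot:
  fixes X Y Q :: "(real^3) set"
  assumes X: "compact X" and Y: "compact Y" and Q: "compact Q"
    and sep: "\<exists>\<delta>>0. \<forall>r. 0 < r \<and> r < \<delta> \<longrightarrow> msum X (dilate r Q) \<inter> Y = {}"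
    and lim: "filterlim (mink_quot Q X) at_top (at_right 0)"
  shows "filterlim (mink_quot Q (X \<union> Y)) at_top (at_right 0)"
proof -
  obtain \<delta> where \<delta>: "\<delta> > 0" and sp: "\<And>r. 0 < r \<Longrightarrow> r < \<delta> \<Longrightarrow> msum X (dilate r Q) \<inter> Y = {}"
    using sep by blast
  have XY: "compact (X \<union> Y)" using X Y by (rule compact_Un)
  have "mink_quot Q X r \<le> mink_quot Q (X \<union> Y) r" if r: "0 < r" "r < \<delta>" for r
  proof -
    have sub: "msum X (dilate r Q) - X \<subseteq> msum (X \<union> Y) (dilate r Q) - (X \<union> Y)"
      using sp[OF r] unfolding msum_def by blast
    have "measure lebesgue (msum X (dilate r Q) - X) \<le> measure lebesgue (msum (X \<union> Y) (dilate r Q) - (X \<union> Y))"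
    proof (rule measure_mono_fmeasurable[OF sub])
      show "msum X (dilate r Q) - X \<in> sets lebesgue" using msum_diff_fmeas[OF X Q] by (rule fmeasurableD)
      show "msum (X \<union> Y) (dilate r Q) - (X \<union> Y) \<in> lmeasurable" by (rule msum_diff_fmeas[OF XY Q])
    qed
    then show ?thesis using r by (simp add: mink_quot_def divide_right_mono)
  qed
  then have "\<forall>\<^sub>F r in at_right 0. mink_quot Q X r \<le> mink_quot Q (X \<union> Y) r"
    unfolding eventually_at_right_field using \<delta> by blast
  then show ?thesis by (rule filterlim_at_top_mono[OF lim])
qed

lemma e1_norm: "\<bar>m - m'\<bar> \<le> norm (vector [m, 0, 0] - vector [m', 0, 0] :: real^3)"
  using component_le_norm_cart[of "vector [m, 0, 0] - vector [m', 0, 0] :: real^3" 1] by simp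

lemma cpy_ball:
  assumes C: "C \<subseteq> cball 0 B" and R: "\<And>v. norm (R v) = norm v"
  shows "cpy m R ` C \<subseteq> cball (vector [m,0,0]) B"
  using C R by (auto simp: cpy_def dist_norm)

lemma msum_ball:
  fixes X Q :: "(real^3) set"
  assumes X: "X \<subseteq> cball c B" and Q: "Q \<subseteq> cball 0 B'" and B': "B' \<ge> 0" and r: "0 < r" "r < 1/(B'+1)"
  shows "msum X (dilate r Q) \<subseteq> cball c (B + 1)"
proof
  fix z assume "z \<in> msum X (dilate r Q)"
  then obtain x q where xq: "x \<in> X" "q \<in> Q" "z = x + r *\<^sub>R q" by (auto simp: msum_def dilate_def)
  have "norm q \<le> B'" using xq Q by auto
  then have "r * norm q \<le> r * B'" using r by (intro mult_left_mono) auto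
  also have "r * B' \<le> 1"
  proof -
    have "r * (B'+1) < 1" using r B' by (simp add: field_simps)
    then show ?thesis using r by (simp add: algebra_simps)
  qed
  finally have "norm (r *\<^sub>R q) \<le> 1" using r by simp
  moreover have "dist c x \<le> B" using xq X by auto
  moreover have "dist c z \<le> dist c x + norm (r *\<^sub>R q)"
  proof -
    have "c - z = (c - x) - r *\<^sub>R q" using xq by (simp add: algebra_simps)
    then show ?thesis by (metis dist_norm norm_triangle_ineq4)
  qed
  ultimately show "z \<in> cball c (B + 1)" by simp
qed


lemma hk_lborel:
  fixes f :: "'a::euclidean_space \<Rightarrow> real"
  assumes S: "compact S" and f: "continuous_on S f"
  shows "integral S f = integral\<^sup>L lborel (\<lambda>x. indicator S x * f x)" "f integrable_on S"
proof -
  have int: "integrable lborel (\<lambda>x. indicator S x *\<^sub>R f x)" by (rule borel_integrable_compact[OF S f])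
  have eq: "(\<lambda>x. indicator S x * f x) = (\<lambda>x. if x \<in> S then f x else 0)"
    by (auto simp: indicator_def)
  have "((\<lambda>x. indicator S x * f x) has_integral integral\<^sup>L lborel (\<lambda>x. indicator S x * f x)) UNIV"
    using has_integral_integral_lborel[OF int] by simp
  then have h: "(f has_integral integral\<^sup>L lborel (\<lambda>x. indicator S x * f x)) S"
    unfolding eq has_integral_restrict_UNIV .
  then show "integral S f = integral\<^sup>L lborel (\<lambda>x. indicator S x * f x)" by (simp add: integral_unique)
  show "f integrable_on S" using h by blast
qed

lemma div_cont:
  assumes "continuous_on UNIV \<phi>'"
  shows "continuous_on S (divergence \<phi>')"
  unfolding divergence_def
  by (intro continuous_on_sum continuous_on_blinfun_matrix continuous_on_subset[OF assms]) auto

lemma sum_Basis_cart: "(\<Sum>i\<in>(Basis :: (real^'n) set). g i) = (\<Sum>j\<in>UNIV. g (axis j 1))"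
proof -
  have "(Basis :: (real^'n) set) = range (\<lambda>j. axis j 1)" by (auto simp: Basis_vec_def)
  moreover have "inj (\<lambda>j::'n. axis j (1::real))" by (auto intro: injI simp: axis_eq_axis)
  ultimately show ?thesis by (metis (no_types, lifting) sum.reindex comp_apply sum.cong)
qed

lemma div3: "divergence (f :: (real^3) \<Rightarrow> ((real^3) \<Rightarrow>\<^sub>L (real^3))) x = (blinfun_apply (f x) (axis 1 1))$1 + (blinfun_apply (f x) (axis 2 1))$2 + (blinfun_apply (f x) (axis 3 1))$3"
  unfolding divergence_def sum_Basis_cart by (simp add: sum_3 inner_axis)

lemma div2: "divergence (f :: (real^2) \<Rightarrow> ((real^2) \<Rightarrow>\<^sub>L (real^2))) x = (blinfun_apply (f x) (axis 1 1))$1 + (blinfun_apply (f x) (axis 2 1))$2"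
  unfolding divergence_def sum_Basis_cart by (simp add: sum_2 inner_axis)

lemma distr_rot: "distr lborel borel rot2 = (lborel :: (real^3) measure)" "distr lborel borel rot3 = (lborel :: (real^3) measure)"
proof -
  have meas: "rot2 \<in> borel_measurable borel" "rot3 \<in> borel_measurable borel"
    using linear_rot by (auto intro!: borel_measurable_continuous_onI linear_continuous_on simp: linear_conv_bounded_linear)
  have "lborel = distr lborel borel R" if R: "R = rot2 \<and> R' = rot3 \<or> R = rot3 \<and> R' = rot2" for R R'
  proof (rule lborel_eqI)
    fix l u :: "real^3"
    assume lu: "\<And>b. b \<in> Basis \<Longrightarrow> l \<bullet> b \<le> u \<bullet> b"
    have lu': "l$i \<le> u$i" for i using lu[of "axis i 1"] by (auto simp: Basis_vec_def cart_eq_inner_axis)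
    have pre: "R -` box l u = box (R' l) (R' u)"
      using R by (auto simp: rot2_def rot3_def mem_box_cart forall_3)
    have ne: "R' l \<in> cbox (R' l) (R' u)" using R lu' by (auto simp: rot2_def rot3_def mem_box_cart forall_3)
    have ne': "l \<in> cbox l u" using lu' by (auto simp: mem_box_cart)
    have mR: "R \<in> borel_measurable borel" using R meas by auto
    have "emeasure (distr lborel borel R) (box l u) = emeasure lborel (R -` box l u \<inter> space lborel)"
      using mR by (intro emeasure_distr) auto
    also have "\<dots> = emeasure lborel (box (R' l) (R' u))" by (simp add: pre)
    also have "\<dots> = ennreal (Henstock_Kurzweil_Integration.content (cbox (R' l) (R' u)))"
    proof -
      have le: "\<forall>b\<in>Basis. R' l \<bullet> b \<le> R' u \<bullet> b" using ne by (auto simp: mem_box)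
      then show ?thesis by (simp add: emeasure_lborel_box content_cbox inner_diff_left)
    qed
    also have "\<dots> = ennreal (Henstock_Kurzweil_Integration.content (cbox l u))"
    proof -
      have n1: "cbox (R' l) (R' u) \<noteq> {}" "cbox l u \<noteq> {}" using ne ne' by blast+
      show ?thesis unfolding content_cbox_cart[OF n1(1)] content_cbox_cart[OF n1(2)] prod_3
        using R by (auto simp: rot2_def rot3_def mult_ac)
    qed
    also have "\<dots> = ennreal (prod ((\<bullet>) (u - l)) Basis)"
      using lu by (simp add: content_cbox inner_diff_left)
    finally show "emeasure (distr lborel borel R) (box l u) = ennreal (prod ((\<bullet>) (u - l)) Basis)" .
  qed simp
  then show "distr lborel borel rot2 = (lborel :: (real^3) measure)" "distr lborel borel rot3 = (lborel :: (real^3) measure)"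
    by metis+
qed


lemma fp_union:
  fixes E1 E2 :: "'a::euclidean_space set"
  assumes c1: "compact E1" and c2: "compact E2" and d: "E1 \<inter> E2 = {}"
    and f1: "finite_perimeter E1" and f2: "finite_perimeter E2"
  shows "finite_perimeter (E1 \<union> E2)"
proof -
  obtain C1 where C1: "\<forall>\<phi> \<phi>'. test_field \<phi> \<phi>' \<longrightarrow> integral E1 (divergence \<phi>') \<le> C1"
    using f1 by (auto simp: finite_perimeter_def)
  obtain C2 where C2: "\<forall>\<phi> \<phi>'. test_field \<phi> \<phi>' \<longrightarrow> integral E2 (divergence \<phi>') \<le> C2"
    using f2 by (auto simp: finite_perimeter_def)
  have "integral (E1 \<union> E2) (divergence \<phi>') \<le> C1 + C2" if tf: "test_field \<phi> \<phi>'" for \<phi> \<phi>'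
  proof -
    have cont: "continuous_on UNIV \<phi>'" using tf by (simp add: test_field_def)
    have i1: "divergence \<phi>' integrable_on E1" by (rule hk_lborel(2)[OF c1 div_cont[OF cont]])
    have i2: "divergence \<phi>' integrable_on E2" by (rule hk_lborel(2)[OF c2 div_cont[OF cont]])
    have "(divergence \<phi>' has_integral (integral E1 (divergence \<phi>') + integral E2 (divergence \<phi>'))) (E1 \<union> E2)"
      using i1 i2 d by (intro has_integral_Un) (auto simp: has_integral_integral)
    then have "integral (E1 \<union> E2) (divergence \<phi>') = integral E1 (divergence \<phi>') + integral E2 (divergence \<phi>')"
      by (rule integral_unique)
    then show ?thesis using C1 C2 tf by (smt (verit))
  qed
  moreover have "E1 \<union> E2 \<in> sets lebesgue"
    using c1 c2 by (intro fmeasurableD lmeasurable_compact compact_Un)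
  ultimately show ?thesis unfolding finite_perimeter_def by blast
qed

lemma linR: "R = id \<or> R = rot2 \<or> R = rot3 \<Longrightarrow> linear R"
  using linear_rot linear_id by auto

lemma contR: "R = id \<or> R = rot2 \<or> R = rot3 \<Longrightarrow> continuous_on S R"
  by (intro linear_continuous_on) (metis linear_conv_bounded_linear linR)

lemma cont_cpy: "R = id \<or> R = rot2 \<or> R = rot3 \<Longrightarrow> continuous_on S (cpy m R)"
  unfolding cpy_def by (intro continuous_intros contR)

lemma distr_cpy:
  assumes R: "R = id \<or> R = rot2 \<or> R = rot3"
  shows "distr lborel borel (cpy m R) = lborel"
proof -
  have mR: "R \<in> borel_measurable borel" using R by (intro borel_measurable_continuous_onI contR)
  show ?thesis
  proof (cases "R = id")
    case True
    have "cpy m R = (+) (vector [m, 0, 0] :: real^3)" using True by (auto simp: cpy_def fun_eq_iff add.commute)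
    then show ?thesis by (simp add: lborel_distr_plus)
  next
    case False
    then have dR: "distr lborel borel R = lborel" using R distr_rot by auto
    have eq: "cpy m R = (+) (vector [m, 0, 0] :: real^3) \<circ> R" by (auto simp: cpy_def fun_eq_iff add.commute)
    have "distr lborel borel (cpy m R) = distr (distr lborel borel R) borel ((+) (vector [m, 0, 0] :: real^3))"
      unfolding eq by (rule distr_distr[symmetric]) (use mR in auto)
    also have "\<dots> = lborel" by (simp add: dR lborel_distr_plus)
    finally show ?thesis .
  qed
qed

lemma integral_cpy:
  fixes F :: "real^3 \<Rightarrow> real"
  assumes F: "F \<in> borel_measurable borel" and R: "R = id \<or> R = rot2 \<or> R = rot3"
  shows "integral\<^sup>L lborel (\<lambda>x. F (cpy m R x)) = integral\<^sup>L lborel F"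
proof -
  have mT: "cpy m R \<in> borel_measurable borel" using R by (intro borel_measurable_continuous_onI cont_cpy)
  have "integral\<^sup>L lborel F = integral\<^sup>L (distr lborel borel (cpy m R)) F" by (simp add: distr_cpy[OF R])
  also have "\<dots> = integral\<^sup>L lborel (\<lambda>x. F (cpy m R x))"
    using F mT by (intro integral_distr) auto
  finally show ?thesis by simp
qed


lemma n3': "(2::3) \<noteq> 1" "(3::3) \<noteq> 1" "(3::3) \<noteq> 2" using n3 by auto

lemma rot_axis:
  "rot2 (axis 1 1) = axis 2 1" "rot2 (axis 2 1) = axis 3 1" "rot2 (axis 3 1) = axis 1 1"
  "rot3 (axis 1 1) = axis 3 1" "rot3 (axis 2 1) = axis 1 1" "rot3 (axis 3 1) = axis 2 1"
  by (simp_all add: rot2_def rot3_def vec3_eq axis_def n3 n3' n3[symmetric] n3'[symmetric])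

lemma rot_nth: "(rot2 w)$1 = w$3" "(rot2 w)$2 = w$1" "(rot2 w)$3 = w$2"
  "(rot3 w)$1 = w$2" "(rot3 w)$2 = w$3" "(rot3 w)$3 = w$1"
  by (simp_all add: rot2_def rot3_def)

definition rinv :: "(real^3 \<Rightarrow> real^3) \<Rightarrow> real^3 \<Rightarrow> real^3" where
  "rinv R = (if R = rot2 then rot3 else if R = rot3 then rot2 else id)"

lemma rinv_props:
  assumes R: "R = id \<or> R = rot2 \<or> R = rot3"
  shows "R (rinv R x) = x" "rinv R (R x) = x" "rinv R = id \<or> rinv R = rot2 \<or> rinv R = rot3"
    "norm (R x) = norm x" "norm (rinv R x) = norm x"
  using R by (auto simp: rinv_def)

lemma trace_rot:
  fixes L :: "real^3 \<Rightarrow> real^3"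
  assumes R: "R = id \<or> R = rot2 \<or> R = rot3"
  shows "(rinv R (L (R (axis 1 1))))$1 + (rinv R (L (R (axis 2 1))))$2 + (rinv R (L (R (axis 3 1))))$3
       = (L (axis 1 1))$1 + (L (axis 2 1))$2 + (L (axis 3 1))$3"
proof -
  have a23: "axis 2 1 \<noteq> (axis 3 1 :: real^3)" "axis 1 1 \<noteq> (axis 2 1 :: real^3)" "axis 1 1 \<noteq> (axis 3 1 :: real^3)"
    by (simp_all add: axis_eq_axis n3)
  have "rot2 \<noteq> rot3"
  proof
    assume "rot2 = rot3"
    then have "rot2 (axis 1 1) = rot3 (axis 1 1)" by simp
    then show False using a23 by (simp add: rot_axis)
  qed
  moreover have "rot2 \<noteq> id"
  proof
    assume "rot2 = id"
    then have "rot2 (axis 1 1) = axis 1 1" by simp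
    then show False using a23 by (simp add: rot_axis)
  qed
  moreover have "rot3 \<noteq> id"
  proof
    assume "rot3 = id"
    then have "rot3 (axis 1 1) = axis 1 1" by simp
    then show False using a23 by (simp add: rot_axis)
  qed
  ultimately have ne: "rot2 \<noteq> rot3" "rot2 \<noteq> id" "rot3 \<noteq> id" by auto
  consider "R = id" | "R = rot2" | "R = rot3" using R by blast
  then show ?thesis
  proof cases
    case 1 then show ?thesis using ne by (simp add: rinv_def)
  next
    case 2 then show ?thesis using ne by (simp add: rinv_def rot_axis rot_nth)
  next
    case 3 then show ?thesis using ne by (simp add: rinv_def rot_axis rot_nth)
  qed
qed


lemma fp_img:
  fixes E :: "(real^3) set"
  assumes E: "compact E" and fE: "finite_perimeter E" and R: "R = id \<or> R = rot2 \<or> R = rot3"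
  shows "finite_perimeter (cpy m R ` E)"
proof -
  define T where "T = cpy m R"
  define R' where "R' = rinv R"
  obtain C where C: "\<forall>\<phi> \<phi>'. test_field \<phi> \<phi>' \<longrightarrow> integral E (divergence \<phi>') \<le> C"
    using fE by (auto simp: finite_perimeter_def)
  have TE: "compact (T ` E)" unfolding T_def by (intro compact_continuous_image cont_cpy E R)
  have R'3: "R' = id \<or> R' = rot2 \<or> R' = rot3" unfolding R'_def by (rule rinv_props(3)[OF R])
  have blR: "bounded_linear R" "bounded_linear R'"
    using linR[OF R] linR[OF R'3] by (simp_all add: linear_conv_bounded_linear)
  have injT: "inj T"
  proof (rule injI)
    fix x y assume "T x = T y"
    then have "R x = R y" by (simp add: T_def cpy_def)
    then have "R' (R x) = R' (R y)" by simp
    then show "x = y" by (simp add: R'_def rinv_props(2)[OF R])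
  qed
  have key: "integral (T ` E) (divergence \<phi>') \<le> C" if tf: "test_field \<phi> \<phi>'" for \<phi> \<phi>'
  proof -
    have der: "\<And>x. (\<phi> has_derivative blinfun_apply (\<phi>' x)) (at x)" and cont: "continuous_on UNIV \<phi>'"
      and bnd: "bounded {x. \<phi> x \<noteq> 0}" and nrm: "\<And>x. norm (\<phi> x) \<le> 1"
      using tf by (auto simp: test_field_def)
    define \<psi> where "\<psi> x = R' (\<phi> (T x))" for x
    define \<psi>' where "\<psi>' x = Blinfun R' o\<^sub>L \<phi>' (T x) o\<^sub>L Blinfun R" for x
    have app: "blinfun_apply (\<psi>' x) = R' \<circ> (blinfun_apply (\<phi>' (T x)) \<circ> R)" for x
      by (simp add: \<psi>'_def fun_eq_iff blinfun_apply_blinfun_compose bounded_linear_Blinfun_apply blR)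
    have dT: "(T has_derivative R) (at x)" for x
      unfolding T_def cpy_def by (intro has_derivative_add_const bounded_linear_imp_has_derivative blR)
    have d\<psi>: "(\<psi> has_derivative blinfun_apply (\<psi>' x)) (at x)" for x
    proof -
      have "((\<phi> \<circ> T) has_derivative (blinfun_apply (\<phi>' (T x)) \<circ> R)) (at x)"
        by (rule diff_chain_at[OF dT der])
      then have "((R' \<circ> (\<phi> \<circ> T)) has_derivative (R' \<circ> (blinfun_apply (\<phi>' (T x)) \<circ> R))) (at x)"
        by (rule diff_chain_at) (rule bounded_linear_imp_has_derivative[OF blR(2)])
      moreover have "R' \<circ> (\<phi> \<circ> T) = \<psi>" by (simp add: \<psi>_def fun_eq_iff)
      ultimately show ?thesis by (simp add: app)
    qed
    have c\<psi>: "continuous_on UNIV \<psi>'"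
    proof -
      have "continuous_on UNIV (\<lambda>x. \<phi>' (T x))"
        by (rule continuous_on_compose2[OF cont]) (auto simp: T_def intro: cont_cpy[OF R])
      then show ?thesis unfolding \<psi>'_def by (intro continuous_intros)
    qed
    have b\<psi>: "bounded {x. \<psi> x \<noteq> 0}"
    proof -
      obtain b where b: "\<And>y. \<phi> y \<noteq> 0 \<Longrightarrow> norm y \<le> b" using bnd by (auto simp: bounded_iff)
      have "norm x \<le> b + norm (vector [m, 0, 0] :: real^3)" if "\<psi> x \<noteq> 0" for x
      proof -
        have "\<phi> (T x) \<noteq> 0"
        proof
          assume "\<phi> (T x) = 0"
          then have "\<psi> x = 0" using linear_0[OF linR[OF R'3]] by (simp add: \<psi>_def)
          then show False using that by simp
        qed
        then have "norm (T x) \<le> b" by (rule b)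
        moreover have "norm x = norm (T x - vector [m, 0, 0])"
          using rinv_props(4)[OF R] by (simp add: T_def cpy_def)
        ultimately show ?thesis by (smt (verit) norm_triangle_ineq4)
      qed
      then show ?thesis unfolding bounded_iff by blast
    qed
    have n\<psi>: "norm (\<psi> x) \<le> 1" for x
      using nrm rinv_props(5)[OF R] by (simp add: \<psi>_def R'_def)
    have tf\<psi>: "test_field \<psi> \<psi>'" unfolding test_field_def using d\<psi> c\<psi> b\<psi> n\<psi> by blast
    have div\<psi>: "divergence \<psi>' x = divergence \<phi>' (T x)" for x
      unfolding div3 app using trace_rot[OF R, of "blinfun_apply (\<phi>' (T x))"] by (simp add: R'_def)
    have cd: "continuous_on UNIV (divergence \<phi>')" by (rule div_cont[OF cont])
    have mF: "(\<lambda>y. indicator (T ` E) y * divergence \<phi>' y) \<in> borel_measurable borel"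
      by (intro borel_measurable_times borel_measurable_indicator borel_compact TE borel_measurable_continuous_onI cd)
    have "integral (T ` E) (divergence \<phi>') = integral\<^sup>L lborel (\<lambda>y. indicator (T ` E) y * divergence \<phi>' y)"
      by (rule hk_lborel(1)[OF TE div_cont[OF cont]])
    also have "\<dots> = integral\<^sup>L lborel (\<lambda>x. indicator (T ` E) (T x) * divergence \<phi>' (T x))"
      using integral_cpy[OF mF R, of m] unfolding T_def by simp
    also have "\<dots> = integral\<^sup>L lborel (\<lambda>x. indicator E x * divergence \<psi>' x)"
    proof -
      have "indicator (T ` E) (T x) = (indicator E x :: real)" for x
        using injT by (simp add: indicator_def inj_image_mem_iff)
      then show ?thesis by (simp add: div\<psi>)
    qed
    also have "\<dots> = integral E (divergence \<psi>')"
      by (rule hk_lborel(1)[OF E div_cont[OF c\<psi>], symmetric])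
    also have "\<dots> \<le> C" using C tf\<psi> by blast
    finally show ?thesis .
  qed
  have "T ` E \<in> sets lebesgue" by (intro fmeasurableD lmeasurable_compact TE)
  then show ?thesis using key unfolding finite_perimeter_def T_def by blast
qed


lemma pinv3_comp: "pinv3 (y, t) = vector [y$1, y$2, t]" by (simp add: pinv3_def)

lemma cont_pinv3: "continuous_on S pinv3"
  by (intro linear_continuous_on) (metis linear_conv_bounded_linear linear_pinv3)

lemma ind_cyl: "indicator (cyl D) (pinv3 p) = (indicator D (fst p) * indicator {0..1} (snd p) :: real)"
  by (cases p) (auto simp: indicator_def cyl_def pinv3_def)

lemma cyl_integral:
  fixes F :: "real^3 \<Rightarrow> real" and D :: "(real^2) set"
  assumes D: "compact D" and F: "continuous_on UNIV F"
  shows "integrable (lborel \<Otimes>\<^sub>M lborel) (\<lambda>p. indicator D (fst p) * indicator {0..1} (snd p) * F (pinv3 p))"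
    and "integral (cyl D) F = integral\<^sup>L (lborel \<Otimes>\<^sub>M lborel) (\<lambda>p. indicator D (fst p) * indicator {0..1} (snd p) * F (pinv3 p))"
proof -
  have C: "compact (cyl D)" by (rule compact_cyl[OF D])
  define H where "H = (\<lambda>x. indicator (cyl D) x * F x)"
  have iH: "integrable lborel H"
    using borel_integrable_compact[OF C continuous_on_subset[OF F]] by (simp add: H_def)
  have mH: "H \<in> borel_measurable borel"
    unfolding H_def by (intro borel_measurable_times borel_measurable_indicator borel_compact C borel_measurable_continuous_onI F)
  define G where "G = (\<lambda>p. indicator D (fst p) * indicator {0..1} (snd p) * F (pinv3 p))"
  have GH: "G = H \<circ> pinv3" by (auto simp: G_def H_def fun_eq_iff ind_cyl)
  have mG: "G \<in> borel_measurable borel" unfolding GH using mH by (intro measurable_comp[OF pinv3_meas]) auto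
  have GH2: "G (pr3 x) = H x" for x by (simp add: GH)
  have "integrable (distr lborel borel pr3) G"
    using mG by (subst integrable_distr_eq) (auto simp: GH2 iH)
  then show "integrable (lborel \<Otimes>\<^sub>M lborel) (\<lambda>p. indicator D (fst p) * indicator {0..1} (snd p) * F (pinv3 p))"
    by (simp add: distr_pr3 lborel_prod G_def)
  have "integral (cyl D) F = integral\<^sup>L lborel H"
    using hk_lborel(1)[OF C continuous_on_subset[OF F]] by (simp add: H_def)
  also have "\<dots> = integral\<^sup>L (distr lborel borel pr3) G"
    using mG by (subst integral_distr) (auto simp: GH2)
  finally show "integral (cyl D) F = integral\<^sup>L (lborel \<Otimes>\<^sub>M lborel) (\<lambda>p. indicator D (fst p) * indicator {0..1} (snd p) * F (pinv3 p))"
    by (simp add: distr_pr3 lborel_prod G_def)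
qed


lemma ftc_slice:
  fixes \<phi> :: "(real^3) \<Rightarrow> (real^3)" and \<phi>' :: "(real^3) \<Rightarrow> ((real^3) \<Rightarrow>\<^sub>L (real^3))"
  assumes der: "\<And>x. (\<phi> has_derivative blinfun_apply (\<phi>' x)) (at x)" and cont: "continuous_on UNIV \<phi>'"
  shows "(LBINT t. indicator {0..1} t *\<^sub>R (blinfun_apply (\<phi>' (pinv3 (y, t))) (axis 3 1) \<bullet> axis 3 1))
         = \<phi> (pinv3 (y, 1)) \<bullet> axis 3 1 - \<phi> (pinv3 (y, 0)) \<bullet> axis 3 1"
proof -
  define \<gamma> where "\<gamma> t = pinv3 (y, t)" for t
  have \<gamma>eq: "\<gamma> = (\<lambda>t. t *\<^sub>R axis 3 1 + pinv3 (y, 0))"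
    by (auto simp: \<gamma>_def fun_eq_iff pinv3_def vec3_eq axis_def n3 n3[symmetric])
  have d\<gamma>: "(\<gamma> has_derivative (\<lambda>s. s *\<^sub>R axis 3 1)) (at t)" for t
    unfolding \<gamma>eq by (intro has_derivative_add_const bounded_linear_imp_has_derivative bounded_linear_scaleR_left)
  have dF: "((\<lambda>t. \<phi> (\<gamma> t) \<bullet> axis 3 1) has_vector_derivative (blinfun_apply (\<phi>' (\<gamma> t)) (axis 3 1) \<bullet> axis 3 1)) (at t within {0..1})" for t
  proof -
    have "((\<phi> \<circ> \<gamma>) has_derivative (blinfun_apply (\<phi>' (\<gamma> t)) \<circ> (\<lambda>s. s *\<^sub>R axis 3 1))) (at t)"
      by (rule diff_chain_at[OF d\<gamma> der])
    then have "((\<lambda>t. (\<phi> \<circ> \<gamma>) t \<bullet> axis 3 1) has_derivative (\<lambda>s. (blinfun_apply (\<phi>' (\<gamma> t)) \<circ> (\<lambda>s. s *\<^sub>R axis 3 1)) s \<bullet> axis 3 1)) (at t)"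
      by (rule bounded_linear.has_derivative[OF bounded_linear_inner_left])
    then have "((\<lambda>t. \<phi> (\<gamma> t) \<bullet> axis 3 1) has_derivative (\<lambda>s. blinfun_apply (\<phi>' (\<gamma> t)) (s *\<^sub>R axis 3 1) \<bullet> axis 3 1)) (at t)"
      by (simp add: o_def)
    moreover have "(\<lambda>s. blinfun_apply (\<phi>' (\<gamma> t)) (s *\<^sub>R axis 3 1) \<bullet> axis 3 1) = (\<lambda>s. s *\<^sub>R (blinfun_apply (\<phi>' (\<gamma> t)) (axis 3 1) \<bullet> axis 3 1))"
      by (auto simp: fun_eq_iff blinfun.scaleR_right)
    ultimately have "((\<lambda>t. \<phi> (\<gamma> t) \<bullet> axis 3 1) has_derivative (\<lambda>s. s *\<^sub>R (blinfun_apply (\<phi>' (\<gamma> t)) (axis 3 1) \<bullet> axis 3 1))) (at t)"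
      by simp
    then show ?thesis unfolding has_vector_derivative_def[symmetric] by (rule has_vector_derivative_at_within)
  qed
  have cf: "continuous_on {0..1} (\<lambda>t. blinfun_apply (\<phi>' (\<gamma> t)) (axis 3 1) \<bullet> axis 3 1)"
  proof -
    have "continuous_on {0..1} (\<lambda>t. \<phi>' (\<gamma> t))"
      by (rule continuous_on_compose2[OF cont]) (auto simp: \<gamma>eq intro!: continuous_intros)
    then show ?thesis by (rule continuous_on_blinfun_matrix)
  qed
  show ?thesis using integral_FTC_atLeastAtMost[of 0 1 "\<lambda>t. \<phi> (\<gamma> t) \<bullet> axis 3 1", OF _ dF cf]
    by (simp add: \<gamma>_def)
qed


lemma vert_bound:
  fixes D :: "(real^2) set" and \<phi> :: "(real^3) \<Rightarrow> (real^3)" and \<phi>' :: "(real^3) \<Rightarrow> ((real^3) \<Rightarrow>\<^sub>L (real^3))"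
  assumes D: "compact D" and tf: "test_field \<phi> \<phi>'"
  shows "integral (cyl D) (\<lambda>x. blinfun_apply (\<phi>' x) (axis 3 1) \<bullet> axis 3 1) \<le> (LBINT y. indicator D y * 2)"
proof -
  have der: "\<And>x. (\<phi> has_derivative blinfun_apply (\<phi>' x)) (at x)" and cont: "continuous_on UNIV \<phi>'"
    and nrm: "\<And>x. norm (\<phi> x) \<le> 1"
    using tf by (auto simp: test_field_def)
  define k where "k = (\<lambda>x. blinfun_apply (\<phi>' x) (axis 3 1) \<bullet> axis 3 1)"
  have ck: "continuous_on UNIV k" unfolding k_def by (rule continuous_on_blinfun_matrix[OF cont])
  define G where "G = (\<lambda>p. indicator D (fst p) * indicator {0..1} (snd p) * k (pinv3 p))"
  have iG: "integrable (lborel \<Otimes>\<^sub>M lborel) G" unfolding G_def by (rule cyl_integral(1)[OF D ck])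
  have eq: "integral (cyl D) k = integral\<^sup>L (lborel \<Otimes>\<^sub>M lborel) G" unfolding G_def by (rule cyl_integral(2)[OF D ck])
  define d where "d y = \<phi> (pinv3 (y, 1)) \<bullet> axis 3 1 - \<phi> (pinv3 (y, 0)) \<bullet> axis 3 1" for y
  have inner: "(LBINT t. G (y, t)) = indicator D y * d y" for y
  proof -
    have "(LBINT t. G (y, t)) = (LBINT t. indicator D y * (indicator {0..1} t *\<^sub>R k (pinv3 (y, t))))"
      by (simp add: G_def mult.assoc)
    also have "\<dots> = indicator D y * (LBINT t. indicator {0..1} t *\<^sub>R k (pinv3 (y, t)))"
      by (rule integral_mult_right_zero)
    also have "\<dots> = indicator D y * d y"
      using ftc_slice[OF der cont, of y] by (simp add: k_def d_def)
    finally show ?thesis .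
  qed
  have "integral\<^sup>L (lborel \<Otimes>\<^sub>M lborel) G = (LBINT y. LBINT t. G (y, t))"
    by (rule lborel_pair.integral_fst'[OF iG, symmetric])
  also have "\<dots> = (LBINT y. indicator D y * d y)" by (simp add: inner)
  also have "\<dots> \<le> (LBINT y. indicator D y * 2)"
  proof (rule integral_mono)
    show "integrable lborel (\<lambda>y. indicator D y * d y)"
      using lborel_pair.integrable_fst'[OF iG] by (simp add: inner)
    show "integrable lborel (\<lambda>y. indicator D y * (2::real))"
      using borel_integrable_compact[OF D, of "\<lambda>_. 2::real"] by simp
    fix y :: "real^2"
    have "\<bar>\<phi> v \<bullet> axis 3 1\<bar> \<le> 1" for v
      using component_le_norm_cart[of "\<phi> v" 3] nrm[of v] by (simp add: inner_axis)
    then have "d y \<le> 2" unfolding d_def by (smt (verit))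
    then show "indicator D y * d y \<le> indicator D y * 2" by (simp add: indicator_def)
  qed
  finally show ?thesis using eq by (simp add: k_def)
qed


lemma linear_hp: "linear hp" by (auto simp: linear_iff hp_def vec2_eq)

lemma norm_hp: "norm (hp v) \<le> norm v"
proof -
  have "hp v \<bullet> hp v \<le> v \<bullet> v" by (simp add: inner3 inner_vec_def sum_2 hp_def)
  then show ?thesis by (simp add: norm_eq_sqrt_inner)
qed

lemma hp_pinv3[simp]: "hp (pinv3 (y, t)) = y" by (simp add: hp_def pinv3_def vec2_eq)

definition iota :: "real^2 \<Rightarrow> real^3" where "iota v = pinv3 (v, 0)"

lemma linear_iota: "linear iota" by (auto simp: linear_iff iota_def pinv3_def vec3_eq)

lemma iota_axis: "iota (axis 1 1) = axis 1 1" "iota (axis 2 1) = axis 2 1"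
  by (simp_all add: iota_def pinv3_def vec3_eq axis_def n3 n3' n3[symmetric] n3'[symmetric] n2 n2[symmetric])

lemma hp_nth: "(hp w)$1 = w \<bullet> axis 1 1" "(hp w)$2 = w \<bullet> axis 2 1"
  by (simp_all add: hp_def inner_axis)

lemma slice_tf:
  fixes \<phi> :: "(real^3) \<Rightarrow> (real^3)" and \<phi>' :: "(real^3) \<Rightarrow> ((real^3) \<Rightarrow>\<^sub>L (real^3))"
  assumes tf: "test_field \<phi> \<phi>'"
  shows "\<exists>\<zeta> \<zeta>'. test_field (\<zeta> :: (real^2) \<Rightarrow> (real^2)) \<zeta>' \<and> (\<forall>y. divergence \<zeta>' y =
            blinfun_apply (\<phi>' (pinv3 (y, t))) (axis 1 1) \<bullet> axis 1 1 + blinfun_apply (\<phi>' (pinv3 (y, t))) (axis 2 1) \<bullet> axis 2 1)"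
proof -
  have der: "\<And>x. (\<phi> has_derivative blinfun_apply (\<phi>' x)) (at x)" and cont: "continuous_on UNIV \<phi>'"
    and bnd: "bounded {x. \<phi> x \<noteq> 0}" and nrm: "\<And>x. norm (\<phi> x) \<le> 1"
    using tf by (auto simp: test_field_def)
  have bl: "bounded_linear hp" "bounded_linear iota"
    using linear_hp linear_iota by (simp_all add: linear_conv_bounded_linear)
  define \<gamma> where "\<gamma> y = pinv3 (y, t)" for y
  have \<gamma>eq: "\<gamma> = (\<lambda>y. iota y + pinv3 (0, t))"
    by (auto simp: \<gamma>_def iota_def fun_eq_iff pinv3_def vec3_eq)
  define \<zeta> where "\<zeta> = (\<lambda>y. hp (\<phi> (\<gamma> y)))"
  define \<zeta>' where "\<zeta>' y = Blinfun hp o\<^sub>L \<phi>' (\<gamma> y) o\<^sub>L Blinfun iota" for y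
  have app: "blinfun_apply (\<zeta>' y) = hp \<circ> (blinfun_apply (\<phi>' (\<gamma> y)) \<circ> iota)" for y
    by (simp add: \<zeta>'_def fun_eq_iff blinfun_apply_blinfun_compose bounded_linear_Blinfun_apply bl)
  have d\<gamma>: "(\<gamma> has_derivative iota) (at y)" for y
    unfolding \<gamma>eq by (intro has_derivative_add_const bounded_linear_imp_has_derivative bl)
  have d\<zeta>: "(\<zeta> has_derivative blinfun_apply (\<zeta>' y)) (at y)" for y
  proof -
    have "((\<phi> \<circ> \<gamma>) has_derivative (blinfun_apply (\<phi>' (\<gamma> y)) \<circ> iota)) (at y)"
      by (rule diff_chain_at[OF d\<gamma> der])
    then have "((\<lambda>y. hp ((\<phi> \<circ> \<gamma>) y)) has_derivative (\<lambda>v. hp ((blinfun_apply (\<phi>' (\<gamma> y)) \<circ> iota) v))) (at y)"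
      by (rule bounded_linear.has_derivative[OF bl(1)])
    then show ?thesis by (simp add: app \<zeta>_def o_def)
  qed
  have c\<zeta>: "continuous_on UNIV \<zeta>'"
  proof -
    have "continuous_on UNIV (\<lambda>y. \<phi>' (\<gamma> y))"
      by (rule continuous_on_compose2[OF cont]) (auto simp: \<gamma>_def intro!: continuous_on_compose2[OF cont_pinv3] continuous_intros)
    then show ?thesis unfolding \<zeta>'_def by (intro continuous_intros)
  qed
  have b\<zeta>: "bounded {y. \<zeta> y \<noteq> 0}"
  proof -
    obtain b where b: "\<And>x. \<phi> x \<noteq> 0 \<Longrightarrow> norm x \<le> b" using bnd by (auto simp: bounded_iff)
    have "norm y \<le> b" if "\<zeta> y \<noteq> 0" for y
    proof -
      have "\<phi> (\<gamma> y) \<noteq> 0"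
      proof
        assume "\<phi> (\<gamma> y) = 0"
        then have "\<zeta> y = 0" using linear_0[OF linear_hp] by (simp add: \<zeta>_def)
        then show False using that by simp
      qed
      then have "norm (\<gamma> y) \<le> b" by (rule b)
      moreover have "norm y \<le> norm (\<gamma> y)" using norm_hp[of "\<gamma> y"] by (simp add: \<gamma>_def)
      ultimately show ?thesis by simp
    qed
    then show ?thesis unfolding bounded_iff by blast
  qed
  have n\<zeta>: "norm (\<zeta> y) \<le> 1" for y using norm_hp[of "\<phi> (\<gamma> y)"] nrm[of "\<gamma> y"] by (simp add: \<zeta>_def)
  have tf\<zeta>: "test_field \<zeta> \<zeta>'" unfolding test_field_def using d\<zeta> c\<zeta> b\<zeta> n\<zeta> by blast
  have "divergence \<zeta>' y = blinfun_apply (\<phi>' (pinv3 (y, t))) (axis 1 1) \<bullet> axis 1 1 + blinfun_apply (\<phi>' (pinv3 (y, t))) (axis 2 1) \<bullet> axis 2 1" for y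
    unfolding div2 app by (simp add: iota_axis hp_nth \<gamma>_def)
  then show ?thesis using tf\<zeta> by blast
qed


lemma horiz_bound:
  fixes D :: "(real^2) set" and \<phi> :: "(real^3) \<Rightarrow> (real^3)" and \<phi>' :: "(real^3) \<Rightarrow> ((real^3) \<Rightarrow>\<^sub>L (real^3))"
  assumes D: "compact D" and tf: "test_field \<phi> \<phi>'"
    and CD: "\<forall>\<psi> \<psi>'. test_field (\<psi> :: (real^2) \<Rightarrow> (real^2)) \<psi>' \<longrightarrow> integral D (divergence \<psi>') \<le> CD"
  shows "integral (cyl D) (\<lambda>x. blinfun_apply (\<phi>' x) (axis 1 1) \<bullet> axis 1 1 + blinfun_apply (\<phi>' x) (axis 2 1) \<bullet> axis 2 1)
           \<le> (LBINT t::real. indicator {0..1} t * CD)"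
proof -
  have cont: "continuous_on UNIV \<phi>'" using tf by (auto simp: test_field_def)
  define h where "h = (\<lambda>x. blinfun_apply (\<phi>' x) (axis 1 1) \<bullet> axis 1 1 + blinfun_apply (\<phi>' x) (axis 2 1) \<bullet> axis 2 1)"
  have ch: "continuous_on UNIV h" unfolding h_def
    by (intro continuous_intros continuous_on_blinfun_matrix[OF cont])
  define G where "G = (\<lambda>p. indicator D (fst p) * indicator {0..1} (snd p) * h (pinv3 p))"
  have iG: "integrable (lborel \<Otimes>\<^sub>M lborel) G" unfolding G_def by (rule cyl_integral(1)[OF D ch])
  have eq: "integral (cyl D) h = integral\<^sup>L (lborel \<Otimes>\<^sub>M lborel) G" unfolding G_def by (rule cyl_integral(2)[OF D ch])
  have iG': "integrable (lborel \<Otimes>\<^sub>M lborel) (\<lambda>(y, t). G (y, t))" using iG by simp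
  have inner: "(LBINT y. G (y, t)) = indicator {0..1} t * integral D (\<lambda>y. h (pinv3 (y, t)))" for t
  proof -
    have cs: "continuous_on D (\<lambda>y. h (pinv3 (y, t)))"
      by (rule continuous_on_compose2[OF ch]) (auto intro!: continuous_on_compose2[OF cont_pinv3] continuous_intros)
    have "(LBINT y. G (y, t)) = (LBINT y. indicator {0..1} t * (indicator D y * h (pinv3 (y, t))))"
      by (simp add: G_def mult_ac)
    also have "\<dots> = indicator {0..1} t * (LBINT y. indicator D y * h (pinv3 (y, t)))"
      by (rule integral_mult_right_zero)
    also have "\<dots> = indicator {0..1} t * integral D (\<lambda>y. h (pinv3 (y, t)))"
      using hk_lborel(1)[OF D cs] by simp
    finally show ?thesis .
  qed
  have "integral\<^sup>L (lborel \<Otimes>\<^sub>M lborel) G = (LBINT t. LBINT y. G (y, t))"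
    using lborel_pair.integral_snd[OF iG'] by simp
  also have "\<dots> = (LBINT t. indicator {0..1} t * integral D (\<lambda>y. h (pinv3 (y, t))))" by (simp add: inner)
  also have "\<dots> \<le> (LBINT t::real. indicator {0..1} t * CD)"
  proof (rule Bochner_Integration.integral_mono)
    show "integrable lborel (\<lambda>t. indicator {0..1} t * integral D (\<lambda>y. h (pinv3 (y, t))))"
      using lborel_pair.integrable_snd[OF iG'] by (simp add: inner)
    show "integrable lborel (\<lambda>t::real. indicator {0..1} t * CD)"
      using borel_integrable_compact[OF compact_Icc, of 0 1 "\<lambda>_. CD"] by simp
    fix t :: real
    obtain \<zeta> \<zeta>' where z: "test_field (\<zeta> :: (real^2) \<Rightarrow> (real^2)) \<zeta>'"
      and dz: "\<forall>y. divergence \<zeta>' y = blinfun_apply (\<phi>' (pinv3 (y, t))) (axis 1 1) \<bullet> axis 1 1 + blinfun_apply (\<phi>' (pinv3 (y, t))) (axis 2 1) \<bullet> axis 2 1"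
      using slice_tf[OF tf, of t] by blast
    have "divergence \<zeta>' = (\<lambda>y. h (pinv3 (y, t)))" using dz by (simp add: h_def fun_eq_iff)
    then have "integral D (\<lambda>y. h (pinv3 (y, t))) \<le> CD" using CD z by metis
    then show "indicator {0..1} t * integral D (\<lambda>y. h (pinv3 (y, t))) \<le> indicator {0..1} t * CD"
      by (simp add: indicator_def)
  qed
  finally show ?thesis using eq by (simp add: h_def)
qed

lemma fp_cyl:
  fixes D :: "(real^2) set"
  assumes D: "compact D" and fD: "finite_perimeter D"
  shows "finite_perimeter (cyl D)"
proof -
  obtain CD where CD: "\<forall>\<psi> \<psi>'. test_field (\<psi> :: (real^2) \<Rightarrow> (real^2)) \<psi>' \<longrightarrow> integral D (divergence \<psi>') \<le> CD"
    using fD by (auto simp: finite_perimeter_def)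
  have C: "compact (cyl D)" by (rule compact_cyl[OF D])
  have "integral (cyl D) (divergence \<phi>') \<le> (LBINT t::real. indicator {0..1} t * CD) + (LBINT y. indicator D y * 2)"
    if tf: "test_field \<phi> \<phi>'" for \<phi> \<phi>'
  proof -
    have cont: "continuous_on UNIV \<phi>'" using tf by (auto simp: test_field_def)
    define h where "h = (\<lambda>x. blinfun_apply (\<phi>' x) (axis 1 1) \<bullet> axis 1 1 + blinfun_apply (\<phi>' x) (axis 2 1) \<bullet> axis 2 1)"
    define k where "k = (\<lambda>x. blinfun_apply (\<phi>' x) (axis 3 1) \<bullet> axis 3 1)"
    have ch: "continuous_on UNIV h" unfolding h_def
      by (intro continuous_intros continuous_on_blinfun_matrix[OF cont])
    have ck: "continuous_on UNIV k" unfolding k_def by (rule continuous_on_blinfun_matrix[OF cont])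
    have dv: "divergence \<phi>' = (\<lambda>x. h x + k x)"
      by (simp add: fun_eq_iff div3 h_def k_def cart_eq_inner_axis)
    have "integral (cyl D) (divergence \<phi>') = integral (cyl D) h + integral (cyl D) k"
      unfolding dv by (rule integral_add[OF hk_lborel(2)[OF C continuous_on_subset[OF ch]] hk_lborel(2)[OF C continuous_on_subset[OF ck]]]) auto
    also have "\<dots> \<le> (LBINT t::real. indicator {0..1} t * CD) + (LBINT y. indicator D y * 2)"
      using horiz_bound[OF D tf CD] vert_bound[OF D tf] unfolding h_def k_def by (rule add_mono)
    finally show ?thesis .
  qed
  moreover have "cyl D \<in> sets lebesgue" by (intro fmeasurableD lmeasurable_compact C)
  ultimately show ?thesis unfolding finite_perimeter_def by blast
qed


abbreviation v1 :: "real \<Rightarrow> real^3" where "v1 m \<equiv> vector [m, 0, 0]"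

lemma ball_disj:
  assumes "\<bar>m - m'\<bar> \<ge> 2*B + 3"
  shows "cball (v1 m) (B+1) \<inter> cball (v1 m') B = {}"
proof (rule ccontr)
  assume "cball (v1 m) (B+1) \<inter> cball (v1 m') B \<noteq> {}"
  then obtain z where z: "dist (v1 m) z \<le> B+1" "dist (v1 m') z \<le> B" by auto
  have "norm (v1 m - v1 m') \<le> dist (v1 m) z + dist (v1 m') z"
    by (metis dist_norm dist_triangle2)
  then have "\<bar>m - m'\<bar> \<le> 2*B + 1" using e1_norm[of m m'] z by linarith
  then show False using assms by linarith
qed

lemma sep_lemma:
  fixes X Y Q :: "(real^3) set"
  assumes X: "X \<subseteq> cball (v1 m) B" and Y: "Y \<subseteq> cball (v1 m') B \<union> cball (v1 m'') B"
    and d1: "\<bar>m - m'\<bar> \<ge> 2*B + 3" and d2: "\<bar>m - m''\<bar> \<ge> 2*B + 3" and Q: "compact Q"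
  shows "\<exists>\<delta>>0. \<forall>r. 0 < r \<and> r < \<delta> \<longrightarrow> msum X (dilate r Q) \<inter> Y = {}"
proof -
  obtain B' where B': "B' > 0" "\<forall>x\<in>Q. norm x \<le> B'"
    using compact_imp_bounded[OF Q] by (auto simp: bounded_pos)
  have Qb: "Q \<subseteq> cball 0 B'" using B' by auto
  have "msum X (dilate r Q) \<inter> Y = {}" if r: "0 < r" "r < 1/(B'+1)" for r
  proof -
    have "msum X (dilate r Q) \<subseteq> cball (v1 m) (B + 1)"
      using msum_ball[OF X Qb _ r] B' by simp
    then show ?thesis using Y ball_disj[OF d1] ball_disj[OF d2] by blast
  qed
  moreover have "1/(B'+1) > 0" using B' by simp
  ultimately show ?thesis by blast
qed

lemma isometry_cpy:
  assumes "\<And>v. norm (R v) = norm v" "linear R"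
  shows "isometry3 (cpy m R)"
  unfolding isometry3_def cpy_def dist_norm
  using assms by (simp add: linear_diff[symmetric])

lemma continuous_cpy:
  assumes "linear R"
  shows "continuous_on S (cpy m R)"
proof -
  have "continuous_on S R" using assms by (intro linear_continuous_on) (simp add: linear_conv_bounded_linear)
  then show ?thesis unfolding cpy_def by (intro continuous_intros)
qed

lemma rot_image_props:
  fixes Q :: "(real^3) set" and R :: "real^3 \<Rightarrow> real^3"
  assumes R: "linear R" "\<And>v w. R v \<bullet> R w = v \<bullet> w" "inj R"
    and Q: "compact Q" "convex Q" "aff_dim Q = 2" "Q \<subseteq> {x. a \<bullet> x = 0}"
  shows "compact (R ` Q) \<and> convex (R ` Q) \<and> aff_dim (R ` Q) = 2 \<and> R ` Q \<subseteq> {x. R a \<bullet> x = 0}"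
proof (intro conjI)
  show "compact (R ` Q)" using Q(1) R(1)
    by (metis compact_continuous_image linear_continuous_on linear_conv_bounded_linear)
  show "convex (R ` Q)" using Q(2) R(1) by (rule convex_linear_image[rotated])
  show "aff_dim (R ` Q) = 2" using Q(3) aff_dim_injective_linear_image[OF R(1) R(3)] by simp
  show "R ` Q \<subseteq> {x. R a \<bullet> x = 0}" using Q(4) R(2) by auto
qed


theorem mainTheorem12:
  fixes D :: "(real^2) set"
  assumes "compact D" and "finite_perimeter D"
    and "filterlim (mink_quot (cball 0 1) D) at_top (at_right 0)"
  shows "\<not> admits_outer_MC (cball (0::real^3) 1) (cyl D)
    \<and> (\<forall>L :: (real^3) set. subspace L \<and> dim L = 2 \<and> e3 \<notin> L \<longrightarrow>
          \<not> admits_outer_MC (cball 0 1 \<inter> L) (cyl D)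
          \<and> (\<forall>Q. compact Q \<and> convex Q \<and> aff_dim Q = 2 \<and> Q \<subseteq> L \<longrightarrow>
                 filterlim (mink_quot Q (cyl D)) at_top (at_right 0)))
    \<and> (\<exists>A :: (real^3) set. compact A \<and> finite_perimeter A
         \<and> (\<exists>T1 T2 T3. isometry3 T1 \<and> isometry3 T2 \<and> isometry3 T3
              \<and> A = T1 ` cyl D \<union> T2 ` cyl D \<union> T3 ` cyl D
              \<and> T1 ` cyl D \<inter> T2 ` cyl D = {} \<and> T1 ` cyl D \<inter> T3 ` cyl D = {}
              \<and> T2 ` cyl D \<inter> T3 ` cyl D = {})
         \<and> \<not> admits_outer_MC (cball 0 1) A
         \<and> (\<forall>Q :: (real^3) set. compact Q \<and> convex Q \<and> aff_dim Q = 2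
              \<and> (\<exists>L. subspace L \<and> dim L = 2 \<and> Q \<subseteq> L) \<longrightarrow> \<not> admits_outer_MC Q A))"
proof -
  note D = assms(1) and fpD = assms(2) and lim = assms(3)
  let ?C = "cyl D"
  have C: "compact ?C" using D by (rule compact_cyl)
  have P1: "\<not> admits_outer_MC (cball (0::real^3) 1) ?C"
    by (intro not_admits ball_to_infty D lim)
  have P2: "\<forall>L :: (real^3) set. subspace L \<and> dim L = 2 \<and> e3 \<notin> L \<longrightarrow>
          \<not> admits_outer_MC (cball 0 1 \<inter> L) ?C
          \<and> (\<forall>Q. compact Q \<and> convex Q \<and> aff_dim Q = 2 \<and> Q \<subseteq> L \<longrightarrow>
                 filterlim (mink_quot Q ?C) at_top (at_right 0))"
  proof (intro allI impI)
    fix L :: "(real^3) set"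
    assume L: "subspace L \<and> dim L = 2 \<and> e3 \<notin> L"
    then obtain a where a: "a \<noteq> 0" "L = {x. a \<bullet> x = 0}" using subspace_normal by blast
    have a3: "a$3 \<noteq> 0"
    proof
      assume "a$3 = 0"
      then have "e3 \<in> L" using a by (simp add: e3_def inner_axis)
      then show False using L by blast
    qed
    show "\<not> admits_outer_MC (cball 0 1 \<inter> L) ?C
          \<and> (\<forall>Q. compact Q \<and> convex Q \<and> aff_dim Q = 2 \<and> Q \<subseteq> L \<longrightarrow>
                 filterlim (mink_quot Q ?C) at_top (at_right 0))"
    proof (intro conjI allI impI)
      show "\<not> admits_outer_MC (cball 0 1 \<inter> L) ?C"
        unfolding a(2) by (intro not_admits ball_plane_to_infty D lim a3)
      fix Q :: "(real^3) set" assume Q: "compact Q \<and> convex Q \<and> aff_dim Q = 2 \<and> Q \<subseteq> L"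
      then show "filterlim (mink_quot Q ?C) at_top (at_right 0)"
        using plane_to_infty[OF D lim _ _ _ _ a3] a(2) by blast
    qed
  qed
  obtain B where B: "B > 0" "\<forall>x\<in>?C. norm x \<le> B"
    using compact_imp_bounded[OF C] by (auto simp: bounded_pos)
  have CB: "?C \<subseteq> cball 0 B" using B by auto
  define M where "M = 2*B + 3"
  define X1 where "X1 = cpy 0 id ` ?C"
  define X2 where "X2 = cpy M rot2 ` ?C"
  define X3 where "X3 = cpy (2*M) rot3 ` ?C"
  have X1b: "X1 \<subseteq> cball (v1 0) B" unfolding X1_def by (rule cpy_ball[OF CB]) simp
  have X2b: "X2 \<subseteq> cball (v1 M) B" unfolding X2_def by (rule cpy_ball[OF CB]) simp
  have X3b: "X3 \<subseteq> cball (v1 (2*M)) B" unfolding X3_def by (rule cpy_ball[OF CB]) simp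
  have lin: "linear (id::real^3\<Rightarrow>real^3)" "linear rot2" "linear rot3"
    by (simp_all add: linear_id linear_rot)
  have X1c: "compact X1" unfolding X1_def by (intro compact_continuous_image continuous_cpy lin C)
  have X2c: "compact X2" unfolding X2_def by (intro compact_continuous_image continuous_cpy lin C)
  have X3c: "compact X3" unfolding X3_def by (intro compact_continuous_image continuous_cpy lin C)
  have dM: "\<bar>0 - M\<bar> \<ge> 2*B+3" "\<bar>0 - 2*M\<bar> \<ge> 2*B+3" "\<bar>M - 0\<bar> \<ge> 2*B+3" "\<bar>M - 2*M\<bar> \<ge> 2*B+3"
      "\<bar>2*M - 0\<bar> \<ge> 2*B+3" "\<bar>2*M - M\<bar> \<ge> 2*B+3"
    using B by (auto simp: M_def)
  have X1b': "X1 \<subseteq> cball (v1 0) (B+1)" using X1b by (auto simp: subset_iff)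
  have X2b': "X2 \<subseteq> cball (v1 M) (B+1)" using X2b by (auto simp: subset_iff)
  have d12: "X1 \<inter> X2 = {}" using X1b' X2b ball_disj[OF dM(1)] by blast
  have d13: "X1 \<inter> X3 = {}" using X1b' X3b ball_disj[OF dM(2)] by blast
  have d23: "X2 \<inter> X3 = {}" using X2b' X3b ball_disj[OF dM(4)] by blast
  define A where "A = X1 \<union> X2 \<union> X3"
  have Ac: "compact A" unfolding A_def using X1c X2c X3c by (intro compact_Un)
  have fpC: "finite_perimeter ?C" by (rule fp_cyl[OF D fpD])
  have fpA: "finite_perimeter A"
  proof -
    have "finite_perimeter X1" unfolding X1_def by (rule fp_img[OF C fpC]) simp
    moreover have "finite_perimeter X2" unfolding X2_def by (rule fp_img[OF C fpC]) simp
    moreover have "finite_perimeter X3" unfolding X3_def by (rule fp_img[OF C fpC]) simp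
    ultimately show ?thesis unfolding A_def using X1c X2c X3c d12 d13 d23
      by (intro fp_union compact_Un) auto
  qed
  have lim1: "filterlim (mink_quot Q A) at_top (at_right 0)"
    if Q: "compact Q" and l: "filterlim (mink_quot Q X1) at_top (at_right 0)" for Q
  proof -
    have "A = X1 \<union> (X2 \<union> X3)" by (auto simp: A_def)
    moreover have "X2 \<union> X3 \<subseteq> cball (v1 M) B \<union> cball (v1 (2*M)) B" using X2b X3b by auto
    ultimately show ?thesis using union_quot[OF X1c compact_Un[OF X2c X3c] Q sep_lemma[OF X1b _ dM(1) dM(2) Q] l]
      by simp
  qed
  have lim2: "filterlim (mink_quot Q A) at_top (at_right 0)"
    if Q: "compact Q" and l: "filterlim (mink_quot Q X2) at_top (at_right 0)" for Q
  proof -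
    have "A = X2 \<union> (X1 \<union> X3)" by (auto simp: A_def)
    moreover have "X1 \<union> X3 \<subseteq> cball (v1 0) B \<union> cball (v1 (2*M)) B" using X1b X3b by auto
    ultimately show ?thesis using union_quot[OF X2c compact_Un[OF X1c X3c] Q sep_lemma[OF X2b _ dM(3) dM(4) Q] l]
      by simp
  qed
  have lim3: "filterlim (mink_quot Q A) at_top (at_right 0)"
    if Q: "compact Q" and l: "filterlim (mink_quot Q X3) at_top (at_right 0)" for Q
  proof -
    have "A = X3 \<union> (X1 \<union> X2)" by (auto simp: A_def)
    moreover have "X1 \<union> X2 \<subseteq> cball (v1 0) B \<union> cball (v1 M) B" using X1b X2b by auto
    ultimately show ?thesis using union_quot[OF X3c compact_Un[OF X1c X2c] Q sep_lemma[OF X3b _ dM(5) dM(6) Q] l]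
      by simp
  qed
  have q1: "mink_quot Q X1 = mink_quot Q ?C" if "compact Q" for Q
  proof (rule ext)
    fix r
    have "mink_quot Q X1 r = mink_quot (id ` Q) ?C r"
      unfolding X1_def cpy_def using quot_image[OF orth_id _ _ C that, of id] by simp
    then show "mink_quot Q X1 r = mink_quot Q ?C r" by simp
  qed
  have q2: "mink_quot Q X2 = mink_quot (rot3 ` Q) ?C" if "compact Q" for Q
    by (rule ext) (unfold X2_def cpy_def, use quot_image[OF orth_rot(1) _ _ C that, of rot3] in simp)
  have q3: "mink_quot Q X3 = mink_quot (rot2 ` Q) ?C" if "compact Q" for Q
    by (rule ext) (unfold X3_def cpy_def, use quot_image[OF orth_rot(2) _ _ C that, of rot2] in simp)
  have P3a: "\<not> admits_outer_MC (cball 0 1) A"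
  proof -
    have "filterlim (mink_quot (cball 0 1) X1) at_top (at_right 0)"
      using ball_to_infty[OF D lim] q1[OF compact_cball] by simp
    then show ?thesis by (intro not_admits lim1 compact_cball)
  qed
  have P3b: "\<forall>Q :: (real^3) set. compact Q \<and> convex Q \<and> aff_dim Q = 2
              \<and> (\<exists>L. subspace L \<and> dim L = 2 \<and> Q \<subseteq> L) \<longrightarrow> \<not> admits_outer_MC Q A"
  proof (intro allI impI)
    fix Q :: "(real^3) set"
    assume "compact Q \<and> convex Q \<and> aff_dim Q = 2 \<and> (\<exists>L. subspace L \<and> dim L = 2 \<and> Q \<subseteq> L)"
    then obtain L where Q: "compact Q" "convex Q" "aff_dim Q = 2" and L: "subspace L" "dim L = 2" "Q \<subseteq> L"
      by blast
    obtain a where a: "a \<noteq> 0" "L = {x. a \<bullet> x = 0}" using subspace_normal[OF L(1,2)] by blast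
    have QL: "Q \<subseteq> {x. a \<bullet> x = 0}" using L(3) a(2) by simp
    have "a$1 \<noteq> 0 \<or> a$2 \<noteq> 0 \<or> a$3 \<noteq> 0" using a(1) by (auto simp: vec3_eq)
    moreover have "\<not> admits_outer_MC Q A" if a3: "a$3 \<noteq> 0"
    proof -
      have "filterlim (mink_quot Q ?C) at_top (at_right 0)"
        by (rule plane_to_infty[OF D lim Q QL a3])
      then have "filterlim (mink_quot Q X1) at_top (at_right 0)" using q1[OF Q(1)] by simp
      then show "\<not> admits_outer_MC Q A" by (intro not_admits lim1 Q(1))
    qed
    moreover have "\<not> admits_outer_MC Q A" if a1: "a$1 \<noteq> 0"
    proof -
      have inj: "inj rot3" by (metis injI rot23(1))
      have props: "compact (rot3 ` Q) \<and> convex (rot3 ` Q) \<and> aff_dim (rot3 ` Q) = 2 \<and> rot3 ` Q \<subseteq> {x. rot3 a \<bullet> x = 0}"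
        by (rule rot_image_props[OF linear_rot(2) inner_rot(2) inj Q QL])
      have "(rot3 a)$3 \<noteq> 0" using a1 by (simp add: rot3_def)
      then have "filterlim (mink_quot (rot3 ` Q) ?C) at_top (at_right 0)"
        using plane_to_infty[OF D lim] props by blast
      then have "filterlim (mink_quot Q X2) at_top (at_right 0)" using q2[OF Q(1)] by simp
      then show "\<not> admits_outer_MC Q A" by (intro not_admits lim2 Q(1))
    qed
    moreover have "\<not> admits_outer_MC Q A" if a2: "a$2 \<noteq> 0"
    proof -
      have inj: "inj rot2" by (metis injI rot23(2))
      have props: "compact (rot2 ` Q) \<and> convex (rot2 ` Q) \<and> aff_dim (rot2 ` Q) = 2 \<and> rot2 ` Q \<subseteq> {x. rot2 a \<bullet> x = 0}"
        by (rule rot_image_props[OF linear_rot(1) inner_rot(1) inj Q QL])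
      have "(rot2 a)$3 \<noteq> 0" using a2 by (simp add: rot2_def)
      then have "filterlim (mink_quot (rot2 ` Q) ?C) at_top (at_right 0)"
        using plane_to_infty[OF D lim] props by blast
      then have "filterlim (mink_quot Q X3) at_top (at_right 0)" using q3[OF Q(1)] by simp
      then show "\<not> admits_outer_MC Q A" by (intro not_admits lim3 Q(1))
    qed
    ultimately show "\<not> admits_outer_MC Q A" by blast
  qed
  have iso: "isometry3 (cpy 0 id)" "isometry3 (cpy M rot2)" "isometry3 (cpy (2*M) rot3)"
    by (intro isometry_cpy; simp add: linear_id linear_rot)+
  have P3: "\<exists>A :: (real^3) set. compact A \<and> finite_perimeter A
         \<and> (\<exists>T1 T2 T3. isometry3 T1 \<and> isometry3 T2 \<and> isometry3 T3
              \<and> A = T1 ` cyl D \<union> T2 ` cyl D \<union> T3 ` cyl D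
              \<and> T1 ` cyl D \<inter> T2 ` cyl D = {} \<and> T1 ` cyl D \<inter> T3 ` cyl D = {}
              \<and> T2 ` cyl D \<inter> T3 ` cyl D = {})
         \<and> \<not> admits_outer_MC (cball 0 1) A
         \<and> (\<forall>Q :: (real^3) set. compact Q \<and> convex Q \<and> aff_dim Q = 2
              \<and> (\<exists>L. subspace L \<and> dim L = 2 \<and> Q \<subseteq> L) \<longrightarrow> \<not> admits_outer_MC Q A)"
    apply (rule exI[of _ A])
    using Ac fpA P3a P3b iso d12 d13 d23 unfolding A_def X1_def X2_def X3_def by blast
  show ?thesis using P1 P2 P3 by blast
qed


end
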